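(* Let $(G_n)_{n\in\mathbb N}$ be a sequence of graphs with $\min_{v\in V}\delta_v=\omega(\log n)$, fix $p\in[0,1]$ and $k\ge 3$, and for every $n$ run the $(k,p,\mathcal B)$-Edge-Majority dynamics on $G_n$ from the initial configuration in which every node is in state $\mathcal R$. 1. (Slow disruption) If $p<p_k^\star$, then for every constant $\gamma>0$ and every $K>0$, $$\Pr\Big(\forall t\le n^K:\ \frac{\mathrm{vol}(R^{(t)})}{\mathrm{vol}(V)}\ge \varphi^+_{p,k}-\gamma\Big)=1-o(1),$$ and consequently $\Pr(\tau>n^K)=1-o(1)$ for every $K>0$. 2. (Fast disruption) If $p>p_k^\star$, then there is a constant $T=T(p,k)$ such that $\Pr(\tau<T)=1-o(1)$.
   Context: $G_n=(V,E)$ is a finite simple graph with $V=\{1,\dots,n\}$; $N(u)$ is the neighbourhood of $u$, $\delta_u=|N(u)|$ its degree, and $\mathrm{vol}(S)=\sum_{v\in S}\delta_v$. Asymptotic notation ($o(1)$, $\omega(\cdot)$) refers to $n\to\infty$. Each node has a state in $\{\mathcal R,\mathcal B\}$ at each round $t\in\mathbb N_0$; $R^{(t)}$ and $B^{(t)}$ are the sets of nodes in state $\mathcal R$ and $\mathcal B$ at round $t$. The $(k,p,\mathcal B)$-Edge-Majority dynamics: in each round $t\ge 1$, every node $u$ independently samples $k$ neighbours uniformly at random with replacement; for each sampled neighbour $v$, independently, $u$ "sees" $v$ in state $\mathcal B$ with probability $p$ and otherwise sees the true state of $v$ at round $t-1$; $u$ then takes at round $t$ the state it saw more often among the $k$ samples,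 ties broken uniformly at random. The time of disruption is $\tau=\inf\{t\ge0:\mathrm{vol}(B^{(t)})/\mathrm{vol}(V)>1/2\}$. For odd $k$ and $x\in[0,1]$ let $F_{p,k}(x)=\Pr[\mathrm{Bin}(k,(1-p)x)\ge (k+1)/2]$. For odd $k\ge3$, $p_k^\star\in[1/9,1/2)$ denotes the (unique) value such that: for $0\le p<p_k^\star$ the equation $F_{p,k}(x)=x$, $x\in[0,1]$, has exactly three solutions $0<\varphi^-_{p,k}<\varphi^+_{p,k}$; for $p=p_k^\star$ it has exactly two solutions; for $p>p_k^\star$ its only solution is $0$. For even $k$, $p_k^\star:=p_{k-1}^\star$ and $\varphi^+_{p,k}:=\varphi^+_{p,k-1}$. *)

theory Defs
  imports "HOL-Probability.Probability" "HOL-Library.Landau_Symbols"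
begin

text \<open>A graph on V = {1..n} is given by an adjacency predicate E (symmetric, irreflexive,
  edges only within V). A configuration maps nodes to bool: True = state B, False = state R.\<close>

definition simple_graph_on :: "nat \<Rightarrow> (nat \<Rightarrow> nat \<Rightarrow> bool) \<Rightarrow> bool" where
  "simple_graph_on n E \<longleftrightarrow>
     (\<forall>u v. E u v \<longrightarrow> E v u) \<and> (\<forall>u. \<not> E u u) \<and>
     (\<forall>u v. E u v \<longrightarrow> u \<in> {1..n} \<and> v \<in> {1..n})"

definition nbrs :: "(nat \<Rightarrow> nat \<Rightarrow> bool) \<Rightarrow> nat \<Rightarrow> nat set" where
  "nbrs E u = {v. E u v}"

definition deg :: "(nat \<Rightarrow> nat \<Rightarrow> bool) \<Rightarrow> nat \<Rightarrow> nat" where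
  "deg E u = card (nbrs E u)"

definition vol :: "(nat \<Rightarrow> nat \<Rightarrow> bool) \<Rightarrow> nat set \<Rightarrow> real" where
  "vol E S = (\<Sum>v\<in>S. real (deg E v))"

definition min_deg :: "nat \<Rightarrow> (nat \<Rightarrow> nat \<Rightarrow> bool) \<Rightarrow> nat" where
  "min_deg n E = Min (deg E ` {1..n})"

definition red_set :: "nat \<Rightarrow> (nat \<Rightarrow> bool) \<Rightarrow> nat set" where
  "red_set n x = {v \<in> {1..n}. \<not> x v}"

definition blue_set :: "nat \<Rightarrow> (nat \<Rightarrow> bool) \<Rightarrow> nat set" where
  "blue_set n x = {v \<in> {1..n}. x v}"

definition sample_one :: "(nat \<Rightarrow> nat \<Rightarrow> bool) \<Rightarrow> real \<Rightarrow> (nat \<Rightarrow> bool) \<Rightarrow> nat \<Rightarrow> bool pmf" where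
  "sample_one E p x u =
     do { v \<leftarrow> pmf_of_set (nbrs E u); c \<leftarrow> bernoulli_pmf p; return_pmf (c \<or> x v) }"

fun count_B :: "(nat \<Rightarrow> nat \<Rightarrow> bool) \<Rightarrow> real \<Rightarrow> (nat \<Rightarrow> bool) \<Rightarrow> nat \<Rightarrow> nat \<Rightarrow> nat pmf" where
  "count_B E p x u 0 = return_pmf 0"
| "count_B E p x u (Suc m) =
     do { c \<leftarrow> count_B E p x u m; b \<leftarrow> sample_one E p x u; return_pmf (if b then Suc c else c) }"

definition node_update :: "(nat \<Rightarrow> nat \<Rightarrow> bool) \<Rightarrow> nat \<Rightarrow> real \<Rightarrow> (nat \<Rightarrow> bool) \<Rightarrow> nat \<Rightarrow> bool pmf" where
  "node_update E k p x u =
     do { c \<leftarrow> count_B E p x u k;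
          if 2 * c > k then return_pmf True
          else if 2 * c < k then return_pmf False
          else bernoulli_pmf (1/2) }"

text \<open>One round: all nodes of V = {1..n} update independently (nodes outside V stay False).\<close>
definition em_step :: "nat \<Rightarrow> (nat \<Rightarrow> nat \<Rightarrow> bool) \<Rightarrow> nat \<Rightarrow> real \<Rightarrow> (nat \<Rightarrow> bool) \<Rightarrow> (nat \<Rightarrow> bool) pmf" where
  "em_step n E k p x = Pi_pmf {1..n} False (node_update E k p x)"

text \<open>Law of the trajectory (x^(0), ..., x^(T)) as a list of length T+1.\<close>
fun em_traj :: "nat \<Rightarrow> (nat \<Rightarrow> nat \<Rightarrow> bool) \<Rightarrow> nat \<Rightarrow> real \<Rightarrow> (nat \<Rightarrow> bool) \<Rightarrow> nat \<Rightarrow> (nat \<Rightarrow> bool) list pmf" where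
  "em_traj n E k p x0 0 = return_pmf [x0]"
| "em_traj n E k p x0 (Suc T) =
     do { xs \<leftarrow> em_traj n E k p x0 T; y \<leftarrow> em_step n E k p (last xs); return_pmf (xs @ [y]) }"

definition F_pk :: "real \<Rightarrow> nat \<Rightarrow> real \<Rightarrow> real" where
  "F_pk p k x = measure_pmf.prob (binomial_pmf k ((1 - p) * x)) {j. 2 * j \<ge> k + 1}"

definition fixpts :: "real \<Rightarrow> nat \<Rightarrow> real set" where
  "fixpts p k = {x \<in> {0..1}. F_pk p k x = x}"

definition p_star_odd :: "nat \<Rightarrow> real" where
  "p_star_odd k = (THE ps. 1/9 \<le> ps \<and> ps < 1/2 \<and>
       (\<forall>p. 0 \<le> p \<and> p < ps \<longrightarrow> card (fixpts p k) = 3) \<and>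
       card (fixpts ps k) = 2 \<and>
       (\<forall>p. ps < p \<and> p \<le> 1 \<longrightarrow> fixpts p k = {0}))"

definition p_star :: "nat \<Rightarrow> real" where
  "p_star k = (if odd k then p_star_odd k else p_star_odd (k - 1))"

definition phi_plus :: "real \<Rightarrow> nat \<Rightarrow> real" where
  "phi_plus p k = (if odd k then Max (fixpts p k) else Max (fixpts p (k - 1)))"

end

theory Submission
  imports Defs
begin

definition Bp :: "nat \<Rightarrow> nat \<Rightarrow> real \<Rightarrow> real" where
  "Bp n j q = real (n choose j) * q ^ j * (1 - q) ^ (n - j)"

definition Tl :: "nat \<Rightarrow> nat \<Rightarrow> real \<Rightarrow> real" where
  "Tl n a q = (\<Sum>j=a..n. Bp n j q)"

lemma deriv_Bp:
  assumes "1 \<le> j" "j \<le> n"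
  shows "DERIV (Bp n j) q :> real n * (Bp (n-1) (j-1) q - Bp (n-1) j q)"
proof -
  have d: "DERIV (\<lambda>q. real (n choose j) * q ^ j * (1 - q) ^ (n - j)) q :>
     real (n choose j) * (real j * q^(j-1)) * (1-q)^(n-j) + real (n choose j) * q^j * (real (n-j) * (1-q)^(n-j-1) * (0 - 1))"
    by (rule derivative_eq_intros refl)+ simp
  have c1: "real (n choose j) * real j = real n * real ((n-1) choose (j-1))"
    using times_binomial_minus1_eq[of j n] assms by (metis of_nat_mult mult.commute less_le_trans zero_less_one)
  have c2: "real (n choose j) * real (n-j) = real n * real ((n-1) choose j)"
    using binomial_absorb_comp[of n j] by (metis of_nat_mult mult.commute)
  have e1: "n - 1 - (j - 1) = n - j" using assms by simp
  have e2: "n - 1 - j = n - j - 1" by simp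
  have "real (n choose j) * (real j * q^(j-1)) * (1-q)^(n-j) + real (n choose j) * q^j * (real (n-j) * (1-q)^(n-j-1) * (0 - 1))
     = (real (n choose j) * real j) * q^(j-1) * (1-q)^(n-j) - (real (n choose j) * real (n-j)) * q^j * (1-q)^(n-j-1)"
    by (simp add: algebra_simps)
  also have "\<dots> = real n * (Bp (n-1) (j-1) q - Bp (n-1) j q)"
    unfolding c1 c2 Bp_def e1 e2 by (simp add: algebra_simps)
  finally show ?thesis unfolding Bp_def using d by simp
qed

lemma Bp_zero_choose: "j > n \<Longrightarrow> Bp n j q = 0"
  by (simp add: Bp_def)

lemma deriv_Tl:
  assumes "1 \<le> a"
  shows "DERIV (Tl n a) q :> real n * Bp (n-1) (a-1) q"
  using assms
proof (induction "n + 1 - a" arbitrary: a)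
  case 0
  then have an: "a > n" by simp
  have e: "Tl n a = (\<lambda>_. 0)" using an by (auto simp: Tl_def fun_eq_iff)
  have z: "real n * Bp (n-1) (a-1) q = 0"
  proof (cases "n = 0")
    case False then show ?thesis using an by (simp add: Bp_zero_choose)
  qed simp
  show ?case unfolding e z by (rule DERIV_const)
next
  case (Suc d)
  then have an: "a \<le> n" by simp
  have e: "Tl n a = (\<lambda>q. Bp n a q + Tl n (Suc a) q)"
    using an by (auto simp: Tl_def fun_eq_iff sum.atLeast_Suc_atMost)
  have ih: "DERIV (Tl n (Suc a)) q :> real n * Bp (n-1) a q"
    using Suc.hyps(1)[of "Suc a"] Suc.hyps(2) Suc.prems by simp
  have "DERIV (\<lambda>q. Bp n a q + Tl n (Suc a) q) q :> real n * (Bp (n-1) (a-1) q - Bp (n-1) a q) + real n * Bp (n-1) a q"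
    by (intro DERIV_add deriv_Bp ih Suc.prems an)
  then show ?case unfolding e by (simp add: algebra_simps)
qed

lemma Bp_0: "j \<ge> 1 \<Longrightarrow> Bp n j 0 = 0"
  by (simp add: Bp_def)

lemma Tl_0: "a \<ge> 1 \<Longrightarrow> Tl n a 0 = 0"
  by (simp add: Tl_def Bp_0)

lemma Bp_1: "Bp n j 1 = (if j = n then 1 else 0)"
  by (auto simp: Bp_def)

lemma Tl_1: "a \<le> n \<Longrightarrow> Tl n a 1 = 1"
proof -
  assume "a \<le> n"
  then have "Tl n a 1 = (\<Sum>j\<in>{a..n}. if j = n then 1 else 0)" by (simp add: Tl_def Bp_1)
  also have "\<dots> = 1" using \<open>a \<le> n\<close> by (simp add: sum.delta')
  finally show ?thesis .
qed

lemma Bp_nonneg: "0 \<le> q \<Longrightarrow> q \<le> 1 \<Longrightarrow> Bp n j q \<ge> 0"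
  by (simp add: Bp_def)

lemma Bp_total: "(\<Sum>j=0..n. Bp n j q) = 1"
proof -
  have "(q + (1 - q)) ^ n = (\<Sum>j\<le>n. real (n choose j) * q ^ j * (1 - q) ^ (n - j))"
    by (rule binomial_ring)
  then show ?thesis by (simp add: Bp_def atLeast0AtMost)
qed

lemma Bp_sym: "j \<le> n \<Longrightarrow> Bp n j (1 - q) = Bp n (n - j) q"
  by (simp add: Bp_def binomial_symmetric[symmetric] mult.commute)

lemma sum_low_sym:
  assumes "A \<le> n"
  shows "(\<Sum>c=0..A. Bp n c s) = Tl n (n - A) (1 - s)"
  unfolding Tl_def
proof (rule sum.reindex_bij_witness[of _ "\<lambda>j. n - j" "\<lambda>c. n - c"])
  fix c assume "c \<in> {0..A}"
  then show "Bp n (n - c) (1 - s) = Bp n c s" using Bp_sym[of "n-c" n s] assms by simp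
qed (use assms in auto)

lemma Tl_le_1:
  assumes "0 \<le> q" "q \<le> 1"
  shows "Tl n a q \<le> 1"
proof -
  have "Tl n a q \<le> (\<Sum>j=0..n. Bp n j q)"
    unfolding Tl_def by (rule sum_mono2) (auto intro: Bp_nonneg assms)
  then show ?thesis by (simp add: Bp_total)
qed

lemma Tl_nonneg: "0 \<le> q \<Longrightarrow> q \<le> 1 \<Longrightarrow> Tl n a q \<ge> 0"
  unfolding Tl_def by (intro sum_nonneg Bp_nonneg)

lemma Tl_split:
  assumes "a \<le> n"
  shows "(\<Sum>c=0..a. Bp n c q) + Tl n (Suc a) q = 1"
proof -
  have "{0..n} = {0..a} \<union> {Suc a..n}" using assms by auto
  then have "(\<Sum>j=0..n. Bp n j q) = (\<Sum>c=0..a. Bp n c q) + Tl n (Suc a) q"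
    unfolding Tl_def by (subst sum.union_disjoint[symmetric]) auto
  then show ?thesis using Bp_total by simp
qed

definition G :: "nat \<Rightarrow> real \<Rightarrow> real" where
  "G m q = Tl (2*m+1) (m+1) q"

lemma G_sym: "G m (1 - q) = 1 - G m q"
proof -
  have "(\<Sum>c=0..m. Bp (2*m+1) c q) = Tl (2*m+1) (m+1) (1 - q)"
    using sum_low_sym[of m "2*m+1" q] by simp
  moreover have "(\<Sum>c=0..m. Bp (2*m+1) c q) + Tl (2*m+1) (Suc m) q = 1"
    by (rule Tl_split) simp
  ultimately show ?thesis unfolding G_def by simp
qed

lemma G_half: "G m (1/2) = 1/2"
  using G_sym[of m "1/2"] by simp

definition gg :: "nat \<Rightarrow> real \<Rightarrow> real" where
  "gg m q = real (2*m+1) * real ((2*m) choose m) * (q * (1 - q)) ^ m"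

lemma deriv_G: "DERIV (G m) q :> gg m q"
proof -
  have "DERIV (Tl (2*m+1) (m+1)) q :> real (2*m+1) * Bp (2*m+1-1) (m+1-1) q"
    by (rule deriv_Tl) simp
  moreover have "real (2*m+1) * Bp (2*m+1-1) (m+1-1) q = gg m q"
    unfolding Bp_def gg_def by (simp add: power_mult_distrib)
  ultimately show ?thesis unfolding G_def by simp
qed

lemma G_cont: "isCont (G m) q"
  using deriv_G DERIV_isCont by blast

lemma G_cont_on: "continuous_on S (G m)"
  using G_cont by (simp add: continuous_at_imp_continuous_on)

lemma cm_pos: "real (2*m+1) * real ((2*m) choose m) > 0"
  by simp

lemma gg_pos: "0 < q \<Longrightarrow> q < 1 \<Longrightarrow> gg m q > 0"
  unfolding gg_def by (intro mult_pos_pos cm_pos zero_less_power) auto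

lemma G_strict_mono:
  assumes "0 \<le> x" "x < y" "y \<le> 1"
  shows "G m x < G m y"
proof (rule DERIV_pos_imp_increasing_open[OF assms(2)])
  fix t assume "x < t" "t < y"
  then have "gg m t > 0" using assms by (intro gg_pos) auto
  then show "\<exists>d. DERIV (G m) t :> d \<and> d > 0" using deriv_G by blast
qed (rule G_cont_on)

lemma G_mono:
  assumes "0 \<le> x" "x \<le> y" "y \<le> 1"
  shows "G m x \<le> G m y"
  using G_strict_mono[of x y m] assms by (cases "x = y") auto

lemma G_0: "G m 0 = 0" unfolding G_def by (rule Tl_0) simp
lemma G_1: "G m 1 = 1" unfolding G_def by (rule Tl_1) simp
lemma G_le1: "0 \<le> q \<Longrightarrow> q \<le> 1 \<Longrightarrow> G m q \<le> 1" unfolding G_def by (rule Tl_le_1)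
lemma G_ge0: "0 \<le> q \<Longrightarrow> q \<le> 1 \<Longrightarrow> G m q \<ge> 0" unfolding G_def by (rule Tl_nonneg)
lemma G_lt1: "0 \<le> q \<Longrightarrow> q < 1 \<Longrightarrow> G m q < 1" using G_strict_mono[of q 1 m] G_1 by simp

definition phi :: "nat \<Rightarrow> real \<Rightarrow> real" where
  "phi m q = q * gg m q - G m q"

lemma deriv_w: "DERIV (\<lambda>q. (q * (1 - q)) ^ m) q :> real m * (q * (1 - q)) ^ (m - 1) * (1 - 2 * q)"
  by (rule derivative_eq_intros refl)+ (simp add: algebra_simps)

lemma deriv_phi:
  "DERIV (phi m) q :> q * (real (2*m+1) * real ((2*m) choose m) * (real m * (q * (1 - q)) ^ (m - 1) * (1 - 2 * q)))"
proof -
  have d: "DERIV (\<lambda>q. real (2*m+1) * real ((2*m) choose m) * (q * (1 - q)) ^ m) q :>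
      real (2*m+1) * real ((2*m) choose m) * (real m * (q * (1 - q)) ^ (m - 1) * (1 - 2 * q))"
    by (intro DERIV_cmult deriv_w)
  note d2 = DERIV_diff[OF DERIV_mult[OF DERIV_ident d] deriv_G[of m q, unfolded gg_def]]
  show ?thesis unfolding phi_def gg_def using d2 by (simp add: algebra_simps)
qed

lemma phi_cont_on: "continuous_on S (phi m)"
  using deriv_phi DERIV_isCont continuous_at_imp_continuous_on by blast

lemma phi_0: "phi m 0 = 0" by (simp add: phi_def G_0)
lemma phi_1: "m \<ge> 1 \<Longrightarrow> phi m 1 = -1" by (simp add: phi_def G_1 gg_def)

lemma phi_inc:
  assumes "m \<ge> 1" "0 \<le> x" "x < y" "y \<le> 1/2"
  shows "phi m x < phi m y"
proof (rule DERIV_pos_imp_increasing_open[OF assms(3)])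
  fix t assume t: "x < t" "t < y"
  have "t * (real (2*m+1) * real ((2*m) choose m) * (real m * (t * (1 - t)) ^ (m - 1) * (1 - 2 * t))) > 0"
    using t assms by (intro mult_pos_pos cm_pos zero_less_power) auto
  then show "\<exists>d. DERIV (phi m) t :> d \<and> d > 0" using deriv_phi by blast
qed (rule phi_cont_on)

lemma phi_dec:
  assumes "m \<ge> 1" "1/2 \<le> x" "x < y" "y \<le> 1"
  shows "phi m x > phi m y"
proof (rule DERIV_neg_imp_decreasing_open[OF assms(3)])
  fix t assume t: "x < t" "t < y"
  have "t * (real (2*m+1) * real ((2*m) choose m) * (real m * (t * (1 - t)) ^ (m - 1) * (2 * t - 1))) > 0"
    using t assms by (intro mult_pos_pos cm_pos zero_less_power) auto
  then have "t * (real (2*m+1) * real ((2*m) choose m) * (real m * (t * (1 - t)) ^ (m - 1) * (1 - 2 * t))) < 0"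
    by (simp add: algebra_simps)
  then show "\<exists>d. DERIV (phi m) t :> d \<and> d < 0" using deriv_phi by blast
qed (rule phi_cont_on)

definition hh :: "nat \<Rightarrow> real \<Rightarrow> real" where
  "hh m q = G m q / q"

lemma deriv_hh: "q \<noteq> 0 \<Longrightarrow> DERIV (hh m) q :> phi m q / q^2"
proof -
  assume q: "q \<noteq> 0"
  have "DERIV (\<lambda>q. G m q / q) q :> (gg m q * q - G m q * 1) / (q * q)"
    by (intro DERIV_divide deriv_G DERIV_ident q)
  then show ?thesis unfolding hh_def phi_def by (simp add: power2_eq_square algebra_simps)
qed

lemma hh_cont_on: "0 < a \<Longrightarrow> continuous_on {a..b} (hh m)"
  unfolding hh_def by (intro continuous_intros G_cont_on) auto

lemma q0_exists:
  assumes "m \<ge> 1"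
  shows "\<exists>q0. 1/2 < q0 \<and> q0 < 1 \<and> phi m q0 = 0 \<and>
     (\<forall>q. 0 < q \<and> q < q0 \<longrightarrow> phi m q > 0) \<and> (\<forall>q. q0 < q \<and> q \<le> 1 \<longrightarrow> phi m q < 0)"
proof -
  have ph: "phi m (1/2) > 0" using phi_inc[of m 0 "1/2"] assms phi_0 by simp
  have p1: "phi m 1 < 0" using phi_1 assms by simp
  obtain q0 where q0: "1/2 \<le> q0" "q0 \<le> 1" "phi m q0 = 0"
  proof -
    have "\<forall>x. 1/2 \<le> x \<and> x \<le> 1 \<longrightarrow> isCont (phi m) x" using deriv_phi DERIV_isCont by blast
    then have "\<exists>x\<ge>1/2. x \<le> 1 \<and> phi m x = 0"
      using IVT2[of "phi m" 1 0 "1/2"] ph p1 by simp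
    then show ?thesis using that by blast
  qed
  have a: "1/2 < q0" using q0 ph by (cases "q0 = 1/2") auto
  have b: "q0 < 1" using q0 p1 by (cases "q0 = 1") auto
  have c: "phi m q > 0" if "0 < q" "q < q0" for q
  proof (cases "q \<le> 1/2")
    case True
    then show ?thesis using phi_inc[of m 0 q] that assms phi_0 by simp
  next
    case False
    then show ?thesis using phi_dec[of m q q0] that q0 assms by simp
  qed
  have d: "phi m q < 0" if "q0 < q" "q \<le> 1" for q
    using phi_dec[of m q0 q] that q0 a assms by simp
  show ?thesis using a b q0 c d by blast
qed

lemma hh_inc:
  assumes "0 < x" "x < y" "y \<le> q0" "\<forall>q. 0 < q \<and> q < q0 \<longrightarrow> phi m q > 0"
  shows "hh m x < hh m y"
proof (rule DERIV_pos_imp_increasing_open[OF assms(2)])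
  fix t assume t: "x < t" "t < y"
  then have "phi m t / t^2 > 0" using assms by auto
  then show "\<exists>d. DERIV (hh m) t :> d \<and> d > 0" using deriv_hh[of t m] t assms by auto
qed (rule hh_cont_on, fact)

lemma hh_dec:
  assumes "q0 \<le> x" "x < y" "y \<le> 1" "0 < q0" "\<forall>q. q0 < q \<and> q \<le> 1 \<longrightarrow> phi m q < 0"
  shows "hh m x > hh m y"
proof (rule DERIV_neg_imp_decreasing_open[OF assms(2)])
  fix t assume t: "x < t" "t < y"
  then have "phi m t / t^2 < 0" using assms by (auto simp: divide_neg_pos)
  then show "\<exists>d. DERIV (hh m) t :> d \<and> d < 0" using deriv_hh[of t m] t assms by auto
qed (rule hh_cont_on, use assms in auto)

lemma hh_half: "hh m (1/2) = 1" by (simp add: hh_def G_half)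
lemma hh_1: "hh m 1 = 1" by (simp add: hh_def G_1)

lemma binom_facts:
  "real (Suc (Suc (2*m)) choose Suc m) = 2 * real ((2*m+1) choose m)"
  "real (2*m+1) * real ((2*m) choose m) = real (m+1) * real ((2*m+1) choose m)"
proof -
  have s: "(2*m+1) choose (m+1) = (2*m+1) choose m"
    using binomial_symmetric[of m "2*m+1"] by simp
  have "Suc (Suc (2*m)) choose Suc m = ((2*m+1) choose m) + ((2*m+1) choose (m+1))"
    by simp
  then show "real (Suc (Suc (2*m)) choose Suc m) = 2 * real ((2*m+1) choose m)" using s by simp
  have "Suc m * (Suc (2*m) choose Suc m) = Suc (2*m) * ((2*m) choose m)"
    by (rule Suc_times_binomial)
  then have h: "real (m+1) * real ((2*m+1) choose (m+1)) = real (2*m+1) * real ((2*m) choose m)"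
    by (metis Suc_eq_plus1 of_nat_mult)
  show "real (2*m+1) * real ((2*m) choose m) = real (m+1) * real ((2*m+1) choose m)" using h unfolding s by linarith
qed

lemma poly_id:
  fixes q W c :: real and m :: nat
  shows "real (2 * Suc m + 1) * (2 * c) * (q * (1 - q) * W) - real (m+1) * c * W
     - c * (real (m + 1) * W * (1 - 2 * q) * (2 * q - 1) + q * (1 - q) * W * 2) = 0"
  by (simp add: algebra_simps)

lemma G_step:
  "G (Suc m) q - G m q = real ((2*m+1) choose m) * (q * (1 - q)) ^ (m+1) * (2*q - 1)"
proof -
  define c where "c = real ((2*m+1) choose m)"
  define D where "D = (\<lambda>q. G (Suc m) q - G m q - c * (q * (1 - q)) ^ (m+1) * (2*q - 1))"
  have dR: "DERIV (\<lambda>q. c * (q * (1 - q)) ^ (m+1) * (2*q - 1)) x :>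
      c * (real (m+1) * (x * (1 - x)) ^ (m+1-1) * (1 - 2 * x)) * (2*x - 1) + 2 * (c * (x * (1 - x)) ^ (m+1))" for x
  proof -
    have a: "DERIV (\<lambda>q. c * (q * (1 - q)) ^ (m+1)) x :> c * (real (m+1) * (x * (1 - x)) ^ (m+1-1) * (1 - 2 * x))"
      by (rule DERIV_cmult[OF deriv_w])
    have b: "DERIV (\<lambda>q. 2*q - 1) x :> 2"
      using DERIV_diff[OF DERIV_cmult[OF DERIV_ident, of 2] DERIV_const, of 1 x] by simp
    show ?thesis using DERIV_mult[OF a b] by (simp add: mult.commute)
  qed
  have "DERIV D x :> 0" for x
  proof -
    define W where "W = (x * (1 - x)) ^ m"
    note d = DERIV_diff[OF DERIV_diff[OF deriv_G[of "Suc m" x] deriv_G[of m x]] dR[of x]]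
    have e2: "2 * Suc m = Suc (Suc (2*m))" by simp
    have g1: "gg (Suc m) x = real (2 * Suc m + 1) * (2 * c) * (x * (1 - x) * W)"
      unfolding gg_def W_def c_def e2 binom_facts(1) by simp
    have g2: "gg m x = real (m+1) * c * W"
      unfolding gg_def W_def c_def using binom_facts(2)[of m] by simp
    have r: "c * (real (m+1) * (x * (1 - x)) ^ (m+1-1) * (1 - 2 * x)) * (2*x - 1) + 2 * (c * (x * (1 - x)) ^ (m+1))
       = c * (real (m + 1) * W * (1 - 2 * x) * (2 * x - 1) + x * (1 - x) * W * 2)"
      unfolding W_def by (simp add: algebra_simps)
    have "gg (Suc m) x - gg m x - (c * (real (m+1) * (x * (1 - x)) ^ (m+1-1) * (1 - 2 * x)) * (2*x - 1) + 2 * (c * (x * (1 - x)) ^ (m+1))) = 0"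
      unfolding g1 g2 r using poly_id[of m c x W] by simp
    then show ?thesis using d unfolding D_def by simp
  qed
  then have "D q = D 0" by (intro DERIV_isconst_all) blast
  moreover have "D 0 = 0" unfolding D_def by (simp add: G_0)
  ultimately show ?thesis unfolding D_def c_def by simp
qed

lemma G1_34: "G (Suc 0) (3/4) = 27/32"
  by (simp add: G_def Tl_def Bp_def numeral_eq_Suc)

lemma G_34: "m \<ge> 1 \<Longrightarrow> G m (3/4) \<ge> 27/32"
proof (induction m rule: dec_induct)
  case base then show ?case by (simp add: G1_34)
next
  case (step m)
  have "G (Suc m) (3/4) - G m (3/4) \<ge> 0" unfolding G_step by (intro mult_nonneg_nonneg) auto
  then show ?case using step by simp
qed

lemma F_eq_G:
  assumes "0 \<le> p" "p \<le> 1" "0 \<le> x" "x \<le> 1"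
  shows "F_pk p (2*m+1) x = G m ((1 - p) * x)"
proof -
  define q where "q = (1 - p) * x"
  have q: "0 \<le> q" "q \<le> 1" using assms unfolding q_def by (auto intro: mult_le_one)
  let ?B = "binomial_pmf (2*m+1) q"
  have sp: "set_pmf ?B \<subseteq> {..2*m+1}"
    using q by (auto simp: set_pmf_binomial_eq split: if_splits)
  have "{j. 2 * j \<ge> 2*m+1 + 1} \<inter> set_pmf ?B = {m+1..2*m+1} \<inter> set_pmf ?B"
    using sp by auto
  then have "measure_pmf.prob ?B {j. 2 * j \<ge> 2*m+1 + 1} = measure_pmf.prob ?B {m+1..2*m+1}"
    by (metis measure_Int_set_pmf)
  also have "\<dots> = (\<Sum>j\<in>{m+1..2*m+1}. pmf ?B j)"
    by (rule measure_measure_pmf_finite) simp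
  also have "\<dots> = G m q"
    unfolding G_def Tl_def Bp_def using q by simp
  finally show ?thesis unfolding F_pk_def q_def .
qed

lemma hh_structure:
  assumes m: "m \<ge> 1"
  obtains q0 where "1/2 < q0" "q0 < 1"
    "\<And>x y. 0 < x \<Longrightarrow> x < y \<Longrightarrow> y \<le> q0 \<Longrightarrow> hh m x < hh m y"
    "\<And>x y. q0 \<le> x \<Longrightarrow> x < y \<Longrightarrow> y \<le> 1 \<Longrightarrow> hh m y < hh m x"
    "9/8 \<le> hh m q0" "hh m q0 < 2" "q0 * hh m q0 \<le> 1"
proof -
  obtain q0 where q0: "1/2 < q0" "q0 < 1" "phi m q0 = 0"
    "\<forall>q. 0 < q \<and> q < q0 \<longrightarrow> phi m q > 0" "\<forall>q. q0 < q \<and> q \<le> 1 \<longrightarrow> phi m q < 0"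
    using q0_exists[OF m] by blast
  have inc: "hh m x < hh m y" if "0 < x" "x < y" "y \<le> q0" for x y
    using hh_inc[of x y q0 m] that q0 by blast
  have dec: "hh m y < hh m x" if "q0 \<le> x" "x < y" "y \<le> 1" for x y
    using hh_dec[of q0 x y m] that q0 by auto
  have le: "hh m q \<le> hh m q0" if "0 < q" "q \<le> 1" for q
    using inc[of q q0] dec[of q0 q] that by (cases q q0 rule: linorder_cases) auto
  have "hh m (3/4) = G m (3/4) * (4/3)" by (simp add: hh_def)
  then have "hh m (3/4) \<ge> 9/8" using G_34[OF m] by simp
  then have a: "9/8 \<le> hh m q0" using le[of "3/4"] by simp
  have "G m q0 \<le> 1" using q0 by (intro G_le1) auto
  then have c: "q0 * hh m q0 \<le> 1" using q0 by (simp add: hh_def)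
  have b: "hh m q0 < 2"
  proof -
    have "hh m q0 \<le> 1 / q0" using \<open>G m q0 \<le> 1\<close> q0 by (simp add: hh_def divide_right_mono)
    also have "\<dots> < 2" using q0 by (simp add: field_simps)
    finally show ?thesis .
  qed
  show ?thesis by (rule that[OF q0(1,2) inc dec a b c])
qed

locale hstruct =
  fixes m :: nat and q0 :: real
  assumes m: "m \<ge> 1"
    and q0: "1/2 < q0" "q0 < 1"
    and inc: "\<And>x y. 0 < x \<Longrightarrow> x < y \<Longrightarrow> y \<le> q0 \<Longrightarrow> hh m x < hh m y"
    and dec: "\<And>x y. q0 \<le> x \<Longrightarrow> x < y \<Longrightarrow> y \<le> 1 \<Longrightarrow> hh m y < hh m x"
    and Mb: "9/8 \<le> hh m q0" "hh m q0 < 2" "q0 * hh m q0 \<le> 1"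
begin

lemma hh_le_M: "0 < q \<Longrightarrow> q \<le> 1 \<Longrightarrow> hh m q \<le> hh m q0"
  using inc[of q q0] dec[of q0 q] by (cases q q0 rule: linorder_cases) auto

lemma hh_eq_M: "0 < q \<Longrightarrow> q \<le> 1 \<Longrightarrow> hh m q = hh m q0 \<Longrightarrow> q = q0"
  using inc[of q q0] dec[of q0 q] by (cases q q0 rule: linorder_cases) auto

lemma hh_inj_left: "0 < x \<Longrightarrow> x \<le> q0 \<Longrightarrow> 0 < y \<Longrightarrow> y \<le> q0 \<Longrightarrow> hh m x = hh m y \<Longrightarrow> x = y"
  using inc[of x y] inc[of y x] by (cases x y rule: linorder_cases) auto

lemma hh_inj_right: "q0 \<le> x \<Longrightarrow> x \<le> 1 \<Longrightarrow> q0 \<le> y \<Longrightarrow> y \<le> 1 \<Longrightarrow> hh m x = hh m y \<Longrightarrow> x = y"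
  using dec[of x y] dec[of y x] by (cases x y rule: linorder_cases) auto

lemma fix_iff: "0 < a \<Longrightarrow> 0 < x \<Longrightarrow> (G m (a * x) = x) \<longleftrightarrow> hh m (a * x) = 1 / a"
  by (auto simp: hh_def field_simps)

abbreviation "M \<equiv> hh m q0"

lemma M_gt1: "M > 1" using Mb by simp

lemma S_big:
  assumes a: "1 / M < a" "a \<le> 1"
  obtains q1 q2 where "1/2 \<le> q1" "q1 < q0" "q0 < q2" "q2 \<le> a" "hh m q2 = 1 / a"
    "{x\<in>{0..1}. G m (a * x) = x} = {0, q1 / a, q2 / a}"
    "\<And>x. q0 / a < x \<Longrightarrow> x < q2 / a \<Longrightarrow> G m (a * x) > x"
proof -
  have apos: "a > 0" using a M_gt1 by (smt (verit) divide_pos_pos)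
  have c1: "1 \<le> 1 / a" using a apos by simp
  have c2: "1 / a < M" using a apos M_gt1 by (simp add: field_simps)
  have contL: "\<forall>x. 1/2 \<le> x \<and> x \<le> q0 \<longrightarrow> isCont (hh m) x"
    using deriv_hh DERIV_isCont by (metis less_numeral_extra(3) divide_eq_0_iff linorder_not_le order_less_le_trans zero_less_divide_1_iff zero_less_numeral)
  obtain q1 where q1: "1/2 \<le> q1" "q1 \<le> q0" "hh m q1 = 1 / a"
    using IVT[of "hh m" "1/2" "1/a" q0] contL c1 c2 hh_half q0 by auto
  have contR: "\<forall>x. q0 \<le> x \<and> x \<le> 1 \<longrightarrow> isCont (hh m) x"
    using deriv_hh DERIV_isCont q0 by (metis less_trans not_le order.strict_trans1 zero_less_divide_1_iff zero_less_numeral divide_pos_pos less_numeral_extra(3))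
  obtain q2 where q2: "q0 \<le> q2" "q2 \<le> 1" "hh m q2 = 1 / a"
    using IVT2[of "hh m" 1 "1/a" q0] contR c1 c2 hh_1 q0 by auto
  have q1l: "q1 < q0" using q1 c2 by (cases "q1 = q0") auto
  have q2g: "q0 < q2" using q2 c2 by (cases "q2 = q0") auto
  have q0a: "q0 < a"
  proof -
    have "q0 * M \<le> 1" using Mb by simp
    then have "q0 \<le> 1 / M" using M_gt1 by (simp add: field_simps)
    then show ?thesis using a by simp
  qed
  have q2a: "q2 \<le> a"
  proof (rule ccontr)
    assume "\<not> q2 \<le> a"
    then have "hh m q2 < hh m a" using dec[of a q2] q0a q2 by simp
    then have "1 / a < G m a / a" using q2 by (simp add: hh_def)
    then have "1 < G m a" using apos by (simp add: divide_strict_right_mono_neg field_simps)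
    moreover have "G m a \<le> 1" using apos a by (intro G_le1) auto
    ultimately show False by simp
  qed
  have S: "{x\<in>{0..1}. G m (a * x) = x} = {0, q1 / a, q2 / a}"
  proof (intro equalityI subsetI)
    fix x assume x: "x \<in> {x\<in>{0..1}. G m (a * x) = x}"
    show "x \<in> {0, q1 / a, q2 / a}"
    proof (cases "x = 0")
      case False
      then have xp: "x > 0" using x by auto
      have e: "hh m (a * x) = 1 / a" using fix_iff[OF apos xp] x by auto
      have ax: "0 < a * x" "a * x \<le> 1" using xp x apos a by (auto intro: mult_le_one)
      show ?thesis
      proof (cases "a * x \<le> q0")
        case True
        then have "a * x = q1" using hh_inj_left[of "a*x" q1] ax q1 e q0 by auto
        then show ?thesis using apos by (auto simp: field_simps)
      next
        case False
        then have "a * x = q2" using hh_inj_right[of "a*x" q2] ax q2 e by auto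
        then show ?thesis using apos by (auto simp: field_simps)
      qed
    qed simp
  next
    fix x assume "x \<in> {0, q1 / a, q2 / a}"
    moreover have "G m (a * (q1/a)) = q1 / a" "G m (a * (q2/a)) = q2 / a"
      using q1 q2 apos q1l q0 by (auto simp: hh_def field_simps)
    moreover have "q1 / a \<le> 1" "q2 / a \<le> 1" using q1l q0a q2a apos by (auto simp: field_simps)
    moreover have "q1 / a \<ge> 0" "q2 / a \<ge> 0" using q1 q2 apos q0 by auto
    ultimately show "x \<in> {x\<in>{0..1}. G m (a * x) = x}" by (auto simp: G_0)
  qed
  have gt: "G m (a * x) > x" if "q0 / a < x" "x < q2 / a" for x
  proof -
    have ax: "q0 < a * x" "a * x < q2" using that apos by (auto simp: field_simps)
    have "hh m q2 < hh m (a * x)" using dec[of "a*x" q2] ax q2 by simp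
    then have "1 / a < G m (a * x) / (a * x)" using q2 by (simp add: hh_def)
    moreover have "a * x > 0" using ax q0 by simp
    ultimately show ?thesis using apos by (simp add: field_simps)
  qed
  show ?thesis by (rule that[OF q1(1) q1l q2g q2a q2(3) S gt])
qed

lemma S_crit:
  assumes a: "a = 1 / M"
  shows "{x\<in>{0..1}. G m (a * x) = x} = {0, q0 / a}"
proof -
  have apos: "a > 0" using a M_gt1 by simp
  have "q0 * M \<le> a * M" using Mb a M_gt1 by simp
  then have q0a: "q0 \<le> a" using M_gt1 by (meson less_trans mult_right_le_imp_le zero_less_one)
  show ?thesis
  proof (intro equalityI subsetI)
    fix x assume x: "x \<in> {x\<in>{0..1}. G m (a * x) = x}"
    show "x \<in> {0, q0 / a}"
    proof (cases "x = 0")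
      case False
      then have xp: "x > 0" using x by auto
      have e: "hh m (a * x) = M" using fix_iff[OF apos xp] x a by auto
      have ax: "0 < a * x" "a * x \<le> 1" using xp x apos a M_gt1 by (auto intro: mult_le_one)
      have "a * x = q0" using hh_eq_M[OF ax e] .
      then show ?thesis using apos by (auto simp: field_simps)
    qed simp
  next
    fix x assume "x \<in> {0, q0 / a}"
    moreover have "G m (a * (q0/a)) = q0 / a" using apos a q0 by (auto simp: hh_def field_simps)
    moreover have "q0 / a \<le> 1" "q0 / a \<ge> 0" using q0a apos q0 by auto
    ultimately show "x \<in> {x\<in>{0..1}. G m (a * x) = x}" by (auto simp: G_0)
  qed
qed

lemma S_small:
  assumes a: "0 \<le> a" "a < 1 / M" and x: "0 < x" "x \<le> 1"
  shows "G m (a * x) < x"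
proof (cases "a = 0")
  case True then show ?thesis using x by (simp add: G_0)
next
  case False
  then have apos: "a > 0" using a by simp
  have "1 / M < 1" using M_gt1 by simp
  then have "a \<le> 1" using a by simp
  then have ax: "0 < a * x" "a * x \<le> 1" using x apos by (auto intro: mult_le_one)
  have "hh m (a * x) \<le> M" using hh_le_M ax by simp
  also have "M < 1 / a" using a apos M_gt1 by (simp add: field_simps)
  finally have "G m (a * x) / (a * x) < 1 / a" by (simp add: hh_def)
  then show ?thesis using ax apos x by (simp add: field_simps)
qed


lemma fixpts_G:
  assumes "0 \<le> p" "p \<le> 1"
  shows "fixpts p (2*m+1) = {x\<in>{0..1}. G m ((1 - p) * x) = x}"
  unfolding fixpts_def
proof (rule Collect_cong)
  fix x
  show "(x \<in> {0..1} \<and> F_pk p (2 * m + 1) x = x) = (x \<in> {0..1} \<and> G m ((1 - p) * x) = x)"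
    using F_eq_G[OF assms, of x] by auto
qed

definition Pspec :: "real \<Rightarrow> bool" where
  "Pspec ps \<longleftrightarrow> 1/9 \<le> ps \<and> ps < 1/2 \<and>
       (\<forall>p. 0 \<le> p \<and> p < ps \<longrightarrow> card (fixpts p (2*m+1)) = 3) \<and>
       card (fixpts ps (2*m+1)) = 2 \<and>
       (\<forall>p. ps < p \<and> p \<le> 1 \<longrightarrow> fixpts p (2*m+1) = {0})"

lemma Pspec_ps: "Pspec (1 - 1 / M)"
proof -
  have M1: "M > 1" by (rule M_gt1)
  have A: "1/9 \<le> 1 - 1 / M" using Mb M1 by (simp add: field_simps)
  have B: "1 - 1 / M < 1/2" using Mb M1 by (simp add: field_simps)
  have C: "card (fixpts p (2*m+1)) = 3" if p: "0 \<le> p" "p < 1 - 1 / M" for p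
  proof -
    have a: "1 / M < 1 - p" "1 - p \<le> 1" using p by auto
    obtain q1 q2 where qq: "1/2 \<le> q1" "q1 < q0" "q0 < q2" "q2 \<le> 1 - p" "hh m q2 = 1 / (1 - p)"
      "{x\<in>{0..1}. G m ((1 - p) * x) = x} = {0, q1 / (1 - p), q2 / (1 - p)}"
      "\<And>x. q0 / (1 - p) < x \<Longrightarrow> x < q2 / (1 - p) \<Longrightarrow> G m ((1 - p) * x) > x"
      by (rule S_big[OF a]) auto
    have "1 / M > 0" using M1 by simp
    then have ap: "1 - p > 0" using a by linarith
    have p1: "p \<le> 1" using ap by simp
    have fx: "fixpts p (2*m+1) = {0, q1 / (1 - p), q2 / (1 - p)}"
      using fixpts_G[OF p(1) p1] qq(6) by simp
    have lt: "q1 / (1 - p) < q2 / (1 - p)" using qq ap by (simp add: divide_strict_right_mono)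
    have ps: "0 < q1 / (1 - p)" using qq ap by simp
    show ?thesis unfolding fx using lt ps by (auto simp: card_insert_if)
  qed
  have D: "card (fixpts (1 - 1 / M) (2*m+1)) = 2"
  proof -
    have e: "1 - (1 - 1 / M) = 1 / M" by simp
    have f1: "fixpts (1 - 1 / M) (2*m+1) = {x\<in>{0..1}. G m ((1 / M) * x) = x}"
      using fixpts_G[of "1 - 1/M"] A B M1 unfolding e by simp
    have f2: "{x\<in>{0..1}. G m ((1 / M) * x) = x} = {0, q0 / (1 / M)}"
      by (rule S_crit) simp
    have "q0 / (1 / M) > 0" using q0 M1 by simp
    then show ?thesis unfolding f1 f2 by (auto simp: card_insert_if)
  qed
  have E: "fixpts p (2*m+1) = {0}" if p: "1 - 1 / M < p" "p \<le> 1" for p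
  proof -
    have a: "0 \<le> 1 - p" "1 - p < 1 / M" using p by auto
    have "{x\<in>{0..1}. G m ((1 - p) * x) = x} = {0}"
    proof (intro equalityI subsetI)
      fix x assume x: "x \<in> {x\<in>{0..1}. G m ((1 - p) * x) = x}"
      show "x \<in> {0}"
      proof (rule ccontr)
        assume "x \<notin> {0}"
        then have "0 < x" "x \<le> 1" using x by auto
        then have "G m ((1 - p) * x) < x" by (rule S_small[OF a])
        then show False using x by simp
      qed
    qed (simp add: G_0)
    moreover have p0: "0 \<le> p" using p A by linarith
    ultimately show ?thesis unfolding fixpts_G[OF p0 p(2)] by blast
  qed
  show ?thesis unfolding Pspec_def
  proof (intro conjI allI impI)
    fix p :: real assume "0 \<le> p \<and> p < 1 - 1 / M"
    then show "card (fixpts p (2*m+1)) = 3" using C by blast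
  next
    fix p :: real assume "1 - 1 / M < p \<and> p \<le> 1"
    then show "fixpts p (2*m+1) = {0}" using E by blast
  qed (fact A B D)+
qed

lemma pstar_eq: "p_star_odd (2*m+1) = 1 - 1 / M"
proof -
  have "(THE ps. Pspec ps) = 1 - 1 / M"
  proof (rule the_equality)
    show "Pspec (1 - 1 / M)" by (rule Pspec_ps)
  next
    fix y assume y: "Pspec y"
    have P: "Pspec (1 - 1 / M)" by (rule Pspec_ps)
    show "y = 1 - 1 / M"
    proof (rule ccontr)
      assume "y \<noteq> 1 - 1 / M"
      then consider "y < 1 - 1 / M" | "y > 1 - 1 / M" by linarith
      then show False
      proof cases
        case 1
        have y0: "0 \<le> y" using y unfolding Pspec_def by linarith
        have "card (fixpts y (2*m+1)) = 3" using P 1 y0 unfolding Pspec_def by blast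
        moreover have "card (fixpts y (2*m+1)) = 2" using y unfolding Pspec_def by blast
        ultimately show False by simp
      next
        case 2
        have y0: "0 \<le> 1 - 1 / M" using P unfolding Pspec_def by linarith
        have "card (fixpts (1 - 1 / M) (2*m+1)) = 3" using y 2 y0 unfolding Pspec_def by blast
        moreover have "card (fixpts (1 - 1 / M) (2*m+1)) = 2" using P unfolding Pspec_def by blast
        ultimately show False by simp
      qed
    qed
  qed
  then show ?thesis unfolding p_star_odd_def Pspec_def .
qed

end

context hstruct begin

lemma above_props:
  assumes p: "0 \<le> p" "p < p_star_odd (2*m+1)"
  shows "1/2 < Max (fixpts p (2*m+1))" "Max (fixpts p (2*m+1)) \<le> 1"
    "\<And>\<gamma>. \<gamma> > 0 \<Longrightarrow> \<exists>a. 1/2 < a \<and> a \<le> 1 \<and> Max (fixpts p (2*m+1)) - \<gamma> \<le> a \<and> F_pk p (2*m+1) a > a"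
proof -
  have M1: "M > 1" by (rule M_gt1)
  have pl: "p < 1 - 1 / M" using p pstar_eq by simp
  have a: "1 / M < 1 - p" "1 - p \<le> 1" using pl p by auto
  obtain q1 q2 where qq: "1/2 \<le> q1" "q1 < q0" "q0 < q2" "q2 \<le> 1 - p" "hh m q2 = 1 / (1 - p)"
      "{x\<in>{0..1}. G m ((1 - p) * x) = x} = {0, q1 / (1 - p), q2 / (1 - p)}"
      "\<And>x. q0 / (1 - p) < x \<Longrightarrow> x < q2 / (1 - p) \<Longrightarrow> G m ((1 - p) * x) > x"
    by (rule S_big[OF a]) auto
  have "1 / M > 0" using M1 by simp
  then have ap: "1 - p > 0" using a by linarith
  have p1: "p \<le> 1" using ap by simp
  have fx: "fixpts p (2*m+1) = {0, q1 / (1 - p), q2 / (1 - p)}"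
    using fixpts_G[OF p(1) p1] qq(6) by simp
  have lt: "q1 / (1 - p) < q2 / (1 - p)" using qq ap by (simp add: divide_strict_right_mono)
  have ps: "0 < q1 / (1 - p)" using qq ap by simp
  have mx: "Max (fixpts p (2*m+1)) = q2 / (1 - p)"
    unfolding fx by (rule Max_eqI) (use lt ps in auto)
  have q2le: "q2 / (1 - p) \<le> 1" using qq ap by simp
  have q0le: "q0 \<le> q0 / (1 - p)" using ap a q0 by (simp add: field_simps mult_le_cancel_left1)
  have q0lt: "q0 / (1 - p) < q2 / (1 - p)" using qq ap by (simp add: divide_strict_right_mono)
  show "1/2 < Max (fixpts p (2*m+1))" unfolding mx using q0 q0le q0lt by linarith
  show "Max (fixpts p (2*m+1)) \<le> 1" unfolding mx by (rule q2le)
  fix \<gamma> :: real assume g: "\<gamma> > 0"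
  define a' where "a' = max (q2 / (1 - p) - \<gamma>) ((q0 / (1 - p) + q2 / (1 - p)) / 2)"
  have a1: "q0 / (1 - p) < a'" "a' < q2 / (1 - p)"
  proof -
    define A where "A = q0 / (1 - p)"
    define B where "B = q2 / (1 - p)"
    have "A < B" using q0lt unfolding A_def B_def .
    then have "A < max (B - \<gamma>) ((A + B) / 2) \<and> max (B - \<gamma>) ((A + B) / 2) < B" using g unfolding max_def by auto
    then show "q0 / (1 - p) < a'" "a' < q2 / (1 - p)" unfolding a'_def A_def B_def by auto
  qed
  have a2: "1/2 < a'" using a1 q0 q0le by linarith
  have a3: "a' \<le> 1" using a1 q2le by linarith
  have "F_pk p (2*m+1) a' = G m ((1 - p) * a')" using F_eq_G[OF p(1) p1, of a'] a2 a3 by simp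
  also have "\<dots> > a'" using qq(7)[OF a1] .
  finally have F: "F_pk p (2*m+1) a' > a'" .
  have "Max (fixpts p (2*m+1)) - \<gamma> \<le> a'" unfolding mx a'_def by simp
  then show "\<exists>a. 1/2 < a \<and> a \<le> 1 \<and> Max (fixpts p (2*m+1)) - \<gamma> \<le> a \<and> F_pk p (2*m+1) a > a"
    using a2 a3 F by blast
qed

lemma below_props:
  assumes p: "p_star_odd (2*m+1) < p" "p \<le> 1" and x: "0 < x" "x \<le> 1"
  shows "F_pk p (2*m+1) x < x"
proof -
  have M1: "M > 1" by (rule M_gt1)
  have pl: "1 - 1 / M < p" using p pstar_eq by simp
  have a: "0 \<le> 1 - p" "1 - p < 1 / M" using pl p by auto
  have p0: "0 \<le> p" using pl M1 by (smt (verit) divide_le_eq_1_pos)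
  show ?thesis using F_eq_G[OF p0 p(2), of x] x S_small[OF a x] by simp
qed

end

lemma hstruct_ex: "m \<ge> 1 \<Longrightarrow> \<exists>q0. hstruct m q0"
  by (rule hh_structure[of m]) (auto simp: hstruct_def)

lemma F_mono:
  assumes "0 \<le> p" "p \<le> 1" "0 \<le> x" "x \<le> y" "y \<le> 1"
  shows "F_pk p (2*m+1) x \<le> F_pk p (2*m+1) y"
proof -
  have "G m ((1 - p) * x) \<le> G m ((1 - p) * y)"
    using assms by (intro G_mono mult_left_mono mult_nonneg_nonneg mult_le_one) auto
  then show ?thesis using F_eq_G[of p x m] F_eq_G[of p y m] assms by simp
qed

lemma F_range:
  assumes "0 \<le> p" "p \<le> 1" "0 \<le> x" "x \<le> 1"
  shows "0 \<le> F_pk p (2*m+1) x" "F_pk p (2*m+1) x \<le> 1"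
proof -
  have "0 \<le> (1-p)*x" "(1-p)*x \<le> 1" using assms by (auto intro: mult_le_one)
  then show "0 \<le> F_pk p (2*m+1) x" "F_pk p (2*m+1) x \<le> 1"
    using F_eq_G[OF assms, of m] G_ge0[of "(1-p)*x" m] G_le1[of "(1-p)*x" m] by auto
qed

lemma F_cont:
  assumes "0 \<le> p" "p \<le> 1"
  shows "continuous_on {0..1} (F_pk p (2*m+1))"
proof -
  have "continuous_on {0..1} (\<lambda>x. G m ((1 - p) * x))"
    by (intro continuous_on_compose2[OF G_cont_on[of UNIV]] continuous_intros) auto
  then show ?thesis
    by (rule continuous_on_cong[THEN iffD1, rotated 2]) (use F_eq_G assms in auto)
qed

definition rfrac :: "(nat \<Rightarrow> nat \<Rightarrow> bool) \<Rightarrow> (nat \<Rightarrow> bool) \<Rightarrow> nat \<Rightarrow> real" where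
  "rfrac E x u = real (card {v\<in>nbrs E u. \<not> x v}) / real (deg E u)"

lemma rfrac_range: "finite (nbrs E u) \<Longrightarrow> 0 \<le> rfrac E x u \<and> rfrac E x u \<le> 1"
proof -
  assume fin: "finite (nbrs E u)"
  have "card {v\<in>nbrs E u. \<not> x v} \<le> card (nbrs E u)" by (rule card_mono[OF fin]) auto
  then show ?thesis unfolding rfrac_def deg_def
    by (cases "card (nbrs E u) = 0") (auto simp: divide_le_eq_1)
qed

lemma sample_one_eq:
  assumes fin: "finite (nbrs E u)" and ne: "nbrs E u \<noteq> {}" and p: "0 \<le> p" "p \<le> 1"
  shows "sample_one E p x u = bernoulli_pmf (1 - (1 - p) * rfrac E x u)"
proof -
  let ?N = "nbrs E u"
  have inner: "(bernoulli_pmf p \<bind> (\<lambda>c. return_pmf (c \<or> x v))) = (if x v then return_pmf True else bernoulli_pmf p)" for v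
    by (cases "x v") (simp_all add: bind_return_pmf')
  have so: "sample_one E p x u = pmf_of_set ?N \<bind> (\<lambda>v. if x v then return_pmf True else bernoulli_pmf p)"
    unfolding sample_one_def inner ..
  have cN: "card ?N = card {v\<in>?N. x v} + card {v\<in>?N. \<not> x v}"
    using fin by (subst card_Un_disjoint[symmetric]) (auto intro: arg_cong[where f=card])
  have cpos: "card ?N > 0" using fin ne by (simp add: card_gt_0_iff)
  have T: "pmf (sample_one E p x u) True = 1 - (1 - p) * rfrac E x u"
  proof -
    have "pmf (sample_one E p x u) True = (\<Sum>v\<in>?N. pmf (if x v then return_pmf True else bernoulli_pmf p) True) / real (card ?N)"
      unfolding so by (rule pmf_bind_pmf_of_set[OF ne fin])
    also have "(\<Sum>v\<in>?N. pmf (if x v then return_pmf True else bernoulli_pmf p) True) = (\<Sum>v\<in>?N. if x v then 1 else p)"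
      by (intro sum.cong) (auto simp: p)
    also have "(\<Sum>v\<in>?N. if x v then 1 else p) = real (card {v\<in>?N. x v}) + p * real (card {v\<in>?N. \<not> x v})"
      using fin by (simp add: sum.If_cases Int_def)
    also have "(real (card {v\<in>?N. x v}) + p * real (card {v\<in>?N. \<not> x v})) / real (card ?N)
        = 1 - (1 - p) * rfrac E x u"
    proof -
      define A where "A = real (card {v\<in>?N. x v})"
      define B where "B = real (card {v\<in>?N. \<not> x v})"
      have c: "real (card ?N) = A + B" unfolding A_def B_def using cN by simp
      have pos: "A + B > 0" using cpos c by simp
      show ?thesis unfolding rfrac_def deg_def c A_def[symmetric] B_def[symmetric]
        using pos by (simp add: field_simps)
    qed
    finally show ?thesis .
  qed
  have r: "0 \<le> rfrac E x u" "rfrac E x u \<le> 1" using rfrac_range[OF fin] by auto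
  have s01: "0 \<le> 1 - (1 - p) * rfrac E x u" "1 - (1 - p) * rfrac E x u \<le> 1"
    using p r by (auto intro: mult_le_one mult_nonneg_nonneg)
  show ?thesis
  proof (rule pmf_eqI)
    fix b :: bool
    show "pmf (sample_one E p x u) b = pmf (bernoulli_pmf (1 - (1 - p) * rfrac E x u)) b"
      using T s01 by (cases b) (simp_all add: pmf_False_conv_True[of "sample_one E p x u"])
  qed
qed

lemma count_B_eq:
  assumes "sample_one E p x u = bernoulli_pmf s" "0 \<le> s" "s \<le> 1"
  shows "count_B E p x u m = binomial_pmf m s"
proof (induction m)
  case 0 then show ?case using assms by (simp add: binomial_pmf_0)
next
  case (Suc m)
  have "count_B E p x u (Suc m) = binomial_pmf m s \<bind> (\<lambda>c. bernoulli_pmf s \<bind> (\<lambda>b. return_pmf (if b then Suc c else c)))"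
    using Suc assms(1) by simp
  also have "\<dots> = bernoulli_pmf s \<bind> (\<lambda>b. binomial_pmf m s \<bind> (\<lambda>c. return_pmf ((if b then 1 else 0) + c)))"
    by (subst bind_commute_pmf) (intro bind_pmf_cong refl, auto)
  also have "\<dots> = binomial_pmf (Suc m) s"
    using assms by (subst binomial_pmf_Suc) auto
  finally show ?case .
qed

lemma even_id: "Tl (2*m+2) (m+2) t + Bp (2*m+2) (m+1) t / 2 = G m t"
proof -
  define D where "D = (\<lambda>t. Tl (2*m+2) (m+2) t + Bp (2*m+2) (m+1) t / 2 - G m t)"
  have "DERIV D y :> 0" for y
  proof -
    have d1: "DERIV (Tl (2*m+2) (m+2)) y :> real (2*m+2) * Bp (2*m+2-1) (m+2-1) y"
      by (rule deriv_Tl) simp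
    have d2: "DERIV (Bp (2*m+2) (m+1)) y :> real (2*m+2) * (Bp (2*m+2-1) (m+1-1) y - Bp (2*m+2-1) (m+1) y)"
      by (rule deriv_Bp) auto
    note d = DERIV_diff[OF DERIV_add[OF d1 DERIV_cdivide[OF d2, of 2]] deriv_G[of m y]]
    have s: "(2*m+1) choose (m+1) = (2*m+1) choose m"
      using binomial_symmetric[of m "2*m+1"] by simp
    have e1: "Bp (2*m+1) (m+1) y = real ((2*m+1) choose m) * y * (y * (1-y)) ^ m"
      unfolding Bp_def s by (simp add: power_mult_distrib)
    have e2: "Bp (2*m+1) m y = real ((2*m+1) choose m) * (1 - y) * (y * (1-y)) ^ m"
      unfolding Bp_def by (simp add: power_mult_distrib Suc_diff_le)
    have "real (2*m+2) * Bp (2*m+2-1) (m+2-1) y + real (2*m+2) * (Bp (2*m+2-1) (m+1-1) y - Bp (2*m+2-1) (m+1) y) / 2 - gg m y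
       = real (m+1) * (Bp (2*m+1) (m+1) y + Bp (2*m+1) m y) - gg m y"
      by (simp add: field_simps)
    also have "\<dots> = 0"
      unfolding e1 e2 gg_def using binom_facts(2)[of m] by (simp add: algebra_simps)
    finally show ?thesis using d unfolding D_def by simp
  qed
  then have "D t = D 0" by (intro DERIV_isconst_all) blast
  moreover have "D 0 = 0" unfolding D_def by (simp add: G_0 Tl_0 Bp_0)
  ultimately show ?thesis unfolding D_def by simp
qed

definition wt :: "nat \<Rightarrow> nat \<Rightarrow> real" where
  "wt k c = (if k < 2 * c then 0 else if 2 * c < k then 1 else 1/2)"

lemma sum_wt_odd: "(\<Sum>c\<le>2*m+1. Bp (2*m+1) c s * wt (2*m+1) c) = G m (1 - s)"
proof -
  have "{..2*m+1} = {0..m} \<union> {m+1..2*m+1}" by auto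
  then have "(\<Sum>c\<le>2*m+1. Bp (2*m+1) c s * wt (2*m+1) c)
     = (\<Sum>c\<in>{0..m}. Bp (2*m+1) c s * wt (2*m+1) c) + (\<Sum>c\<in>{m+1..2*m+1}. Bp (2*m+1) c s * wt (2*m+1) c)"
    by (simp add: sum.union_disjoint)
  also have "(\<Sum>c\<in>{m+1..2*m+1}. Bp (2*m+1) c s * wt (2*m+1) c) = 0"
    by (intro sum.neutral) (auto simp: wt_def)
  also have "(\<Sum>c\<in>{0..m}. Bp (2*m+1) c s * wt (2*m+1) c) = (\<Sum>c\<in>{0..m}. Bp (2*m+1) c s)"
    by (intro sum.cong) (auto simp: wt_def)
  also have "\<dots> = Tl (2*m+1) (2*m+1-m) (1 - s)" by (rule sum_low_sym) simp
  finally show ?thesis by (simp add: G_def)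
qed

lemma sum_wt_even: "(\<Sum>c\<le>2*m+2. Bp (2*m+2) c s * wt (2*m+2) c) = G m (1 - s)"
proof -
  have "{..2*m+2} = {0..m} \<union> ({m+1} \<union> {m+2..2*m+2})" by auto
  then have "(\<Sum>c\<le>2*m+2. Bp (2*m+2) c s * wt (2*m+2) c)
     = (\<Sum>c\<in>{0..m}. Bp (2*m+2) c s * wt (2*m+2) c) + (Bp (2*m+2) (m+1) s * wt (2*m+2) (m+1)
        + (\<Sum>c\<in>{m+2..2*m+2}. Bp (2*m+2) c s * wt (2*m+2) c))"
    by (simp add: sum.union_disjoint)
  also have "(\<Sum>c\<in>{m+2..2*m+2}. Bp (2*m+2) c s * wt (2*m+2) c) = 0"
    by (intro sum.neutral) (auto simp: wt_def)
  also have "(\<Sum>c\<in>{0..m}. Bp (2*m+2) c s * wt (2*m+2) c) = (\<Sum>c\<in>{0..m}. Bp (2*m+2) c s)"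
    by (intro sum.cong) (auto simp: wt_def)
  also have "\<dots> = Tl (2*m+2) (2*m+2-m) (1 - s)" by (rule sum_low_sym) simp
  also have "Bp (2*m+2) (m+1) s = Bp (2*m+2) (m+1) (1 - s)"
    using Bp_sym[of "m+1" "2*m+2" s] by simp
  also have "wt (2*m+2) (m+1) = 1/2" by (simp add: wt_def)
  finally have "(\<Sum>c\<le>2*m+2. Bp (2*m+2) c s * wt (2*m+2) c) = Tl (2*m+2) (m+2) (1 - s) + Bp (2*m+2) (m+1) (1 - s) / 2"
    by (simp add: numeral_eq_Suc)
  then show ?thesis using even_id by simp
qed

lemma node_update_False_sum:
  assumes "sample_one E p x u = bernoulli_pmf s" "0 \<le> s" "s \<le> 1"
  shows "pmf (node_update E k p x u) False = (\<Sum>c\<le>k. Bp k c s * wt k c)"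
proof -
  have "pmf (node_update E k p x u) False =
     measure_pmf.expectation (binomial_pmf k s) (\<lambda>c. pmf (if 2 * c > k then return_pmf True
          else if 2 * c < k then return_pmf False else bernoulli_pmf (1/2)) False)"
    unfolding node_update_def count_B_eq[OF assms] pmf_bind ..
  also have "\<dots> = (\<Sum>c\<le>k. Bp k c s * wt k c)"
    using assms by (subst expectation_binomial_pmf') (auto simp: Bp_def wt_def intro!: sum.cong)
  finally show ?thesis .
qed

lemma node_update_False:
  assumes fin: "finite (nbrs E u)" and ne: "nbrs E u \<noteq> {}" and p: "0 \<le> p" "p \<le> 1"
    and k: "k = 2*m+1 \<or> k = 2*m+2"
  shows "pmf (node_update E k p x u) False = F_pk p (2*m+1) (rfrac E x u)"
proof -
  define s where "s = 1 - (1 - p) * rfrac E x u"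
  have r: "0 \<le> rfrac E x u" "rfrac E x u \<le> 1" using rfrac_range[OF fin] by auto
  have s01: "0 \<le> s" "s \<le> 1" unfolding s_def
    using p r by (auto intro: mult_le_one mult_nonneg_nonneg)
  have so: "sample_one E p x u = bernoulli_pmf s" unfolding s_def by (rule sample_one_eq[OF fin ne p])
  have "pmf (node_update E k p x u) False = G m (1 - s)"
    unfolding node_update_False_sum[OF so s01] using k sum_wt_odd sum_wt_even by auto
  also have "\<dots> = F_pk p (2*m+1) (rfrac E x u)"
    unfolding s_def using F_eq_G[OF p r] by simp
  finally show ?thesis .
qed

lemma nbrs_sub:
  assumes G: "simple_graph_on n E"
  shows "nbrs E u \<subseteq> {1..n}"
proof
  fix v assume "v \<in> nbrs E u"
  then have e: "E u v" by (simp add: nbrs_def)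
  have "\<forall>u v. E u v \<longrightarrow> u \<in> {1..n} \<and> v \<in> {1..n}" using G unfolding simple_graph_on_def by (elim conjE)
  then show "v \<in> {1..n}" using e by blast
qed

lemma nbrs_fin: "simple_graph_on n E \<Longrightarrow> finite (nbrs E u)"
  by (rule finite_subset[OF nbrs_sub]) auto

lemma nbrs_ne: "simple_graph_on n E \<Longrightarrow> deg E u > 0 \<Longrightarrow> nbrs E u \<noteq> {}"
  unfolding deg_def by auto

lemma expect_X:
  assumes v: "v \<in> {1..n}"
  shows "measure_pmf.expectation (em_step n E k p x) (\<lambda>y. if y v then 0 else 1 :: real)
       = pmf (node_update E k p x v) False"
proof -
  have "measure_pmf.expectation (em_step n E k p x) (\<lambda>y. if y v then 0 else 1 :: real)
      = measure_pmf.expectation (map_pmf (\<lambda>y. y v) (em_step n E k p x)) (\<lambda>b. if b then 0 else 1 :: real)"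
    by simp
  also have "map_pmf (\<lambda>y. y v) (em_step n E k p x) = node_update E k p x v"
    unfolding em_step_def using v by (subst Pi_pmf_component) auto
  also have "measure_pmf.expectation (node_update E k p x v) (\<lambda>b. if b then 0 else 1 :: real)
      = (\<Sum>b\<in>{False}. pmf (node_update E k p x v) b *\<^sub>R (if b then 0 else 1 :: real))"
    by (rule integral_measure_pmf) auto
  finally show ?thesis by simp
qed

lemma sum_X: "(\<Sum>v\<in>nbrs E u. if y v then 0 else 1 :: real) = real (card {v\<in>nbrs E u. \<not> y v})"
  if "finite (nbrs E u)"
  using that by (simp add: sum.If_cases Int_def)

context
  fixes n :: nat and E :: "nat \<Rightarrow> nat \<Rightarrow> bool" and k m :: nat and p :: real and x :: "nat \<Rightarrow> bool" and u :: nat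
  assumes G: "simple_graph_on n E" and degp: "\<forall>v\<in>{1..n}. deg E v > 0"
    and p: "0 \<le> p" "p \<le> 1" and k: "k = 2*m+1 \<or> k = 2*m+2" and u: "u \<in> {1..n}"
begin

abbreviation "X \<equiv> (\<lambda>v y. if y v then 0 else 1 :: real)"
abbreviation "MM \<equiv> measure_pmf (em_step n E k p x)"

lemma hoeff_interp:
  "Hoeffding_ineq MM (nbrs E u) X (\<lambda>_. 0) (\<lambda>_. 1)"
proof -
  have ind: "prob_space.indep_vars MM (\<lambda>_. count_space UNIV) (\<lambda>v f. f v) {1..n}"
    unfolding em_step_def by (rule indep_vars_Pi_pmf) simp
  have ind2: "prob_space.indep_vars MM (\<lambda>_. borel) X {1..n}"
    using prob_space.indep_vars_compose2[OF measure_pmf.prob_space_axioms ind, of "\<lambda>_ b. if b then 0 else 1 :: real" "\<lambda>_. borel"]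
    by simp
  have ind3: "prob_space.indep_vars MM (\<lambda>_. borel) X (nbrs E u)"
    by (rule prob_space.indep_vars_subset[OF measure_pmf.prob_space_axioms ind2 nbrs_sub[OF G]])
  show ?thesis
    by unfold_locales (auto simp: nbrs_fin[OF G] ind3)
qed

lemma mu_eq: "(\<Sum>i\<in>nbrs E u. measure_pmf.expectation (em_step n E k p x) (X i))
    = (\<Sum>v\<in>nbrs E u. F_pk p (2*m+1) (rfrac E x v))"
proof (intro sum.cong refl)
  fix v assume v: "v \<in> nbrs E u"
  then have vV: "v \<in> {1..n}" using nbrs_sub[OF G, of u] by blast
  show "measure_pmf.expectation (em_step n E k p x) (X v) = F_pk p (2*m+1) (rfrac E x v)"
    unfolding expect_X[OF vV]
    by (rule node_update_False[OF nbrs_fin[OF G] nbrs_ne[OF G] p k]) (use degp vV in auto)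
qed

lemma deg_eq: "real (deg E u) = (\<Sum>i\<in>nbrs E u. (1 - 0 :: real)\<^sup>2)"
  by (simp add: deg_def)

lemma degu: "deg E u > 0" using degp u by auto

lemma step_lower:
  assumes a: "0 \<le> a" "a \<le> 1" and ax: "\<forall>v\<in>{1..n}. a \<le> rfrac E x v" and eps: "\<epsilon> \<ge> 0"
  shows "measure_pmf.prob (em_step n E k p x) {y. rfrac E y u \<le> F_pk p (2*m+1) a - \<epsilon>}
     \<le> exp (-2 * \<epsilon>\<^sup>2 * real (deg E u))"
proof -
  interpret H: Hoeffding_ineq MM "nbrs E u" X "\<lambda>_. 0" "\<lambda>_. 1" "(\<Sum>i\<in>nbrs E u. measure_pmf.expectation (em_step n E k p x) (X i))"
    by (rule hoeff_interp) simp_all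
  define d where "d = real (deg E u)"
  have dpos: "d > 0" unfolding d_def using degu by simp
  have mu: "(\<Sum>i\<in>nbrs E u. measure_pmf.expectation (em_step n E k p x) (X i)) \<ge> d * F_pk p (2*m+1) a"
  proof -
    have "(\<Sum>v\<in>nbrs E u. F_pk p (2*m+1) a) \<le> (\<Sum>v\<in>nbrs E u. F_pk p (2*m+1) (rfrac E x v))"
    proof (intro sum_mono F_mono p a)
      fix v assume v: "v \<in> nbrs E u"
      then have vV: "v \<in> {1..n}" using nbrs_sub[OF G, of u] by blast
      show "a \<le> rfrac E x v" using ax vV by auto
      show "rfrac E x v \<le> 1" using rfrac_range[OF nbrs_fin[OF G]] by auto
    qed
    then show ?thesis unfolding mu_eq d_def deg_def by simp
  qed
  have sub: "{y. rfrac E y u \<le> F_pk p (2*m+1) a - \<epsilon>} \<subseteq>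
      {y\<in>space MM. (\<Sum>i\<in>nbrs E u. X i y) \<le> (\<Sum>i\<in>nbrs E u. measure_pmf.expectation (em_step n E k p x) (X i)) - \<epsilon> * d}"
  proof
    fix y assume y: "y \<in> {y. rfrac E y u \<le> F_pk p (2*m+1) a - \<epsilon>}"
    have "(\<Sum>i\<in>nbrs E u. X i y) = d * rfrac E y u"
      unfolding sum_X[OF nbrs_fin[OF G]] rfrac_def d_def using dpos d_def by simp
    also have "\<dots> \<le> d * (F_pk p (2*m+1) a - \<epsilon>)" using y dpos by (intro mult_left_mono) auto
    also have "\<dots> \<le> (\<Sum>i\<in>nbrs E u. measure_pmf.expectation (em_step n E k p x) (X i)) - \<epsilon> * d"
      using mu by (simp add: algebra_simps)
    finally show "y \<in> {y\<in>space MM. (\<Sum>i\<in>nbrs E u. X i y) \<le> (\<Sum>i\<in>nbrs E u. measure_pmf.expectation (em_step n E k p x) (X i)) - \<epsilon> * d}"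
      by simp
  qed
  have "measure_pmf.prob (em_step n E k p x) {y. rfrac E y u \<le> F_pk p (2*m+1) a - \<epsilon>}
      \<le> measure_pmf.prob (em_step n E k p x) {y\<in>space MM. (\<Sum>i\<in>nbrs E u. X i y) \<le> (\<Sum>i\<in>nbrs E u. measure_pmf.expectation (em_step n E k p x) (X i)) - \<epsilon> * d}"
    by (rule measure_pmf.finite_measure_mono[OF sub]) simp
  also have "\<dots> \<le> exp (-2 * (\<epsilon> * d)\<^sup>2 / (\<Sum>i\<in>nbrs E u. (1 - 0)\<^sup>2))"
    by (rule H.Hoeffding_ineq_le) (use eps dpos deg_eq d_def in auto)
  also have "-2 * (\<epsilon> * d)\<^sup>2 / (\<Sum>i\<in>nbrs E u. (1 - 0 :: real)\<^sup>2) = -2 * \<epsilon>\<^sup>2 * real (deg E u)"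
    unfolding deg_eq[symmetric] d_def using dpos d_def by (simp add: power2_eq_square)
  finally show ?thesis .
qed

lemma step_upper:
  assumes b: "0 \<le> b" "b \<le> 1" and bx: "\<forall>v\<in>{1..n}. rfrac E x v \<le> b" and eps: "\<epsilon> \<ge> 0"
  shows "measure_pmf.prob (em_step n E k p x) {y. rfrac E y u \<ge> F_pk p (2*m+1) b + \<epsilon>}
     \<le> exp (-2 * \<epsilon>\<^sup>2 * real (deg E u))"
proof -
  interpret H: Hoeffding_ineq MM "nbrs E u" X "\<lambda>_. 0" "\<lambda>_. 1" "(\<Sum>i\<in>nbrs E u. measure_pmf.expectation (em_step n E k p x) (X i))"
    by (rule hoeff_interp) simp_all
  define d where "d = real (deg E u)"
  have dpos: "d > 0" unfolding d_def using degu by simp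
  have mu: "(\<Sum>i\<in>nbrs E u. measure_pmf.expectation (em_step n E k p x) (X i)) \<le> d * F_pk p (2*m+1) b"
  proof -
    have "(\<Sum>v\<in>nbrs E u. F_pk p (2*m+1) (rfrac E x v)) \<le> (\<Sum>v\<in>nbrs E u. F_pk p (2*m+1) b)"
    proof (intro sum_mono F_mono p b)
      fix v assume v: "v \<in> nbrs E u"
      then have vV: "v \<in> {1..n}" using nbrs_sub[OF G, of u] by blast
      show "rfrac E x v \<le> b" using bx vV by auto
      show "0 \<le> rfrac E x v" using rfrac_range[OF nbrs_fin[OF G]] by auto
    qed
    then show ?thesis unfolding mu_eq d_def deg_def by simp
  qed
  have sub: "{y. rfrac E y u \<ge> F_pk p (2*m+1) b + \<epsilon>} \<subseteq>
      {y\<in>space MM. (\<Sum>i\<in>nbrs E u. X i y) \<ge> (\<Sum>i\<in>nbrs E u. measure_pmf.expectation (em_step n E k p x) (X i)) + \<epsilon> * d}"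
  proof
    fix y assume y: "y \<in> {y. rfrac E y u \<ge> F_pk p (2*m+1) b + \<epsilon>}"
    have "(\<Sum>i\<in>nbrs E u. measure_pmf.expectation (em_step n E k p x) (X i)) + \<epsilon> * d \<le> d * (F_pk p (2*m+1) b + \<epsilon>)"
      using mu by (simp add: algebra_simps)
    also have "\<dots> \<le> d * rfrac E y u" using y dpos by (intro mult_left_mono) auto
    also have "d * rfrac E y u = (\<Sum>i\<in>nbrs E u. X i y)"
      unfolding sum_X[OF nbrs_fin[OF G]] rfrac_def d_def using dpos d_def by simp
    finally show "y \<in> {y\<in>space MM. (\<Sum>i\<in>nbrs E u. X i y) \<ge> (\<Sum>i\<in>nbrs E u. measure_pmf.expectation (em_step n E k p x) (X i)) + \<epsilon> * d}"
      by simp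
  qed
  have "measure_pmf.prob (em_step n E k p x) {y. rfrac E y u \<ge> F_pk p (2*m+1) b + \<epsilon>}
      \<le> measure_pmf.prob (em_step n E k p x) {y\<in>space MM. (\<Sum>i\<in>nbrs E u. X i y) \<ge> (\<Sum>i\<in>nbrs E u. measure_pmf.expectation (em_step n E k p x) (X i)) + \<epsilon> * d}"
    by (rule measure_pmf.finite_measure_mono[OF sub]) simp
  also have "\<dots> \<le> exp (-2 * (\<epsilon> * d)\<^sup>2 / (\<Sum>i\<in>nbrs E u. (1 - 0)\<^sup>2))"
    by (rule H.Hoeffding_ineq_ge) (use eps dpos deg_eq d_def in auto)
  also have "-2 * (\<epsilon> * d)\<^sup>2 / (\<Sum>i\<in>nbrs E u. (1 - 0 :: real)\<^sup>2) = -2 * \<epsilon>\<^sup>2 * real (deg E u)"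
    unfolding deg_eq[symmetric] d_def using dpos d_def by (simp add: power2_eq_square)
  finally show ?thesis .
qed

end

lemma prob_bind_pmf:
  "measure_pmf.prob (bind_pmf M f) S = measure_pmf.expectation M (\<lambda>x. measure_pmf.prob (f x) S)"
  using measurable_measure_pmf[of f] unfolding measure_pmf_bind
  by (subst measure_pmf.measure_bind[where N="count_space UNIV"]) auto

lemma traj_len:
  "xs \<in> set_pmf (em_traj n E k p x0 T) \<Longrightarrow> length xs = Suc T \<and> xs ! 0 = x0"
proof (induction T arbitrary: xs)
  case 0 then show ?case by simp
next
  case (Suc T)
  then obtain ys y where "ys \<in> set_pmf (em_traj n E k p x0 T)" "xs = ys @ [y]"
    by (auto simp: set_bind_pmf)
  then show ?case using Suc.IH[of ys] by (auto simp: nth_append)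
qed

lemma traj_bound:
  assumes P0: "P 0 x0" and step: "\<And>t x. P t x \<Longrightarrow> measure_pmf.prob (em_step n E k p x) {y. \<not> P (Suc t) y} \<le> \<eta>"
    and eta: "\<eta> \<ge> 0"
  shows "measure_pmf.prob (em_traj n E k p x0 T) {xs. \<exists>t\<le>T. \<not> P t (xs ! t)} \<le> real T * \<eta>"
proof (induction T)
  case 0 then show ?case using P0 by simp
next
  case (Suc T)
  let ?M = "em_traj n E k p x0 T"
  let ?B = "{xs. \<exists>t\<le>T. \<not> P t (xs ! t)}"
  let ?A = "{xs. \<exists>t\<le>Suc T. \<not> P t (xs ! t)}"
  let ?f = "\<lambda>xs. em_step n E k p (last xs) \<bind> (\<lambda>y. return_pmf (xs @ [y]))"
  have "measure_pmf.prob (em_traj n E k p x0 (Suc T)) ?A = measure_pmf.expectation ?M (\<lambda>xs. measure_pmf.prob (?f xs) ?A)"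
    by (simp add: prob_bind_pmf)
  also have "\<dots> \<le> measure_pmf.expectation ?M (\<lambda>xs. indicator ?B xs + \<eta>)"
  proof (rule integral_mono_AE)
    show "integrable (measure_pmf ?M) (\<lambda>xs. measure_pmf.prob (?f xs) ?A)"
      by (intro measure_pmf.integrable_const_bound[where B=1]) auto
    show "integrable (measure_pmf ?M) (\<lambda>xs. indicator ?B xs + \<eta>)"
      by (intro measure_pmf.integrable_const_bound[where B="1 + \<eta>"]) (auto simp: indicator_def eta)
    show "AE xs in measure_pmf ?M. measure_pmf.prob (?f xs) ?A \<le> indicator ?B xs + \<eta>"
    proof (rule AE_pmfI)
      fix xs assume xs: "xs \<in> set_pmf ?M"
      have len: "length xs = Suc T" using traj_len[OF xs] by simp
      show "measure_pmf.prob (?f xs) ?A \<le> indicator ?B xs + \<eta>"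
      proof (cases "xs \<in> ?B")
        case True
        have h: "measure_pmf.prob (?f xs) ?A \<le> 1" by (rule measure_pmf.prob_le_1)
        have i: "indicator ?B xs = (1::real)" using True by simp
        show ?thesis using h i eta by linarith
      next
        case False
        then have good: "\<forall>t\<le>T. P t (xs ! t)" by auto
        have ne: "xs \<noteq> []" using len by auto
        have lastx: "last xs = xs ! T" using last_conv_nth[OF ne] len by simp
        have "measure_pmf.prob (?f xs) ?A = measure_pmf.prob (em_step n E k p (last xs)) ((\<lambda>y. xs @ [y]) -` ?A)"
          by (simp add: map_pmf_def[symmetric])
        also have "(\<lambda>y. xs @ [y]) -` ?A = {y. \<not> P (Suc T) y}"
        proof (intro equalityI subsetI)
          fix y assume "y \<in> (\<lambda>y. xs @ [y]) -` ?A"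
          then obtain t where t: "t \<le> Suc T" "\<not> P t ((xs @ [y]) ! t)" by auto
          show "y \<in> {y. \<not> P (Suc T) y}"
          proof (cases "t = Suc T")
            case True then show ?thesis using t len by (simp add: nth_append)
          next
            case False
            then have "t \<le> T" using t by simp
            then show ?thesis using t good len by (simp add: nth_append)
          qed
        next
          fix y assume "y \<in> {y. \<not> P (Suc T) y}"
          then show "y \<in> (\<lambda>y. xs @ [y]) -` ?A" using len by (auto simp: nth_append intro!: exI[of _ "Suc T"])
        qed
        also have "measure_pmf.prob (em_step n E k p (last xs)) {y. \<not> P (Suc T) y} \<le> \<eta>"
          using step[of T "last xs"] good lastx by simp
        finally show ?thesis using False by simp
      qed
    qed
  qed
  also have "\<dots> = measure_pmf.prob ?M ?B + \<eta>"
    by (subst Bochner_Integration.integral_add) (auto intro!: measure_pmf.integrable_const_bound[where B=1] simp: indicator_def)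
  also have "\<dots> \<le> real T * \<eta> + \<eta>" using Suc.IH by simp
  finally show ?case by (simp add: algebra_simps)
qed

lemma step_all_lower:
  assumes G: "simple_graph_on n E" and degp: "\<forall>v\<in>{1..n}. deg E v > 0"
    and p: "0 \<le> p" "p \<le> 1" and k: "k = 2*m+1 \<or> k = 2*m+2"
    and a: "0 \<le> a" "a \<le> 1" and ax: "\<forall>v\<in>{1..n}. a \<le> rfrac E x v" and eps: "\<epsilon> \<ge> 0"
    and D: "\<forall>u\<in>{1..n}. D \<le> real (deg E u)"
  shows "measure_pmf.prob (em_step n E k p x) {y. \<exists>u\<in>{1..n}. rfrac E y u \<le> F_pk p (2*m+1) a - \<epsilon>}
     \<le> real n * exp (-2 * \<epsilon>\<^sup>2 * D)"
proof -
  have "{y. \<exists>u\<in>{1..n}. rfrac E y u \<le> F_pk p (2*m+1) a - \<epsilon>} = (\<Union>u\<in>{1..n}. {y. rfrac E y u \<le> F_pk p (2*m+1) a - \<epsilon>})"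
    by auto
  also have "measure_pmf.prob (em_step n E k p x) \<dots> \<le> (\<Sum>u\<in>{1..n}. measure_pmf.prob (em_step n E k p x) {y. rfrac E y u \<le> F_pk p (2*m+1) a - \<epsilon>})"
    by (rule measure_pmf.finite_measure_subadditive_finite) auto
  also have "\<dots> \<le> (\<Sum>u\<in>{1..n}. exp (-2 * \<epsilon>\<^sup>2 * D))"
  proof (rule sum_mono)
    fix u assume u: "u \<in> {1..n}"
    have "measure_pmf.prob (em_step n E k p x) {y. rfrac E y u \<le> F_pk p (2*m+1) a - \<epsilon>} \<le> exp (-2 * \<epsilon>\<^sup>2 * real (deg E u))"
      by (rule step_lower[OF G degp p k u a ax eps])
    also have "\<dots> \<le> exp (-2 * \<epsilon>\<^sup>2 * D)"
    proof -
      have Du: "D \<le> real (deg E u)" using D u by auto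
      show ?thesis using mult_left_mono[OF Du, of "\<epsilon>\<^sup>2"] by simp
    qed
    finally show "measure_pmf.prob (em_step n E k p x) {y. rfrac E y u \<le> F_pk p (2*m+1) a - \<epsilon>} \<le> exp (-2 * \<epsilon>\<^sup>2 * D)" .
  qed
  also have "\<dots> = real n * exp (-2 * \<epsilon>\<^sup>2 * D)" by simp
  finally show ?thesis .
qed

lemma step_all_upper:
  assumes G: "simple_graph_on n E" and degp: "\<forall>v\<in>{1..n}. deg E v > 0"
    and p: "0 \<le> p" "p \<le> 1" and k: "k = 2*m+1 \<or> k = 2*m+2"
    and b: "0 \<le> b" "b \<le> 1" and bx: "\<forall>v\<in>{1..n}. rfrac E x v \<le> b" and eps: "\<epsilon> \<ge> 0"
    and D: "\<forall>u\<in>{1..n}. D \<le> real (deg E u)"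
  shows "measure_pmf.prob (em_step n E k p x) {y. \<exists>u\<in>{1..n}. rfrac E y u \<ge> F_pk p (2*m+1) b + \<epsilon>}
     \<le> real n * exp (-2 * \<epsilon>\<^sup>2 * D)"
proof -
  have "{y. \<exists>u\<in>{1..n}. rfrac E y u \<ge> F_pk p (2*m+1) b + \<epsilon>} = (\<Union>u\<in>{1..n}. {y. rfrac E y u \<ge> F_pk p (2*m+1) b + \<epsilon>})"
    by auto
  also have "measure_pmf.prob (em_step n E k p x) \<dots> \<le> (\<Sum>u\<in>{1..n}. measure_pmf.prob (em_step n E k p x) {y. rfrac E y u \<ge> F_pk p (2*m+1) b + \<epsilon>})"
    by (rule measure_pmf.finite_measure_subadditive_finite) auto
  also have "\<dots> \<le> (\<Sum>u\<in>{1..n}. exp (-2 * \<epsilon>\<^sup>2 * D))"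
  proof (rule sum_mono)
    fix u assume u: "u \<in> {1..n}"
    have "measure_pmf.prob (em_step n E k p x) {y. rfrac E y u \<ge> F_pk p (2*m+1) b + \<epsilon>} \<le> exp (-2 * \<epsilon>\<^sup>2 * real (deg E u))"
      by (rule step_upper[OF G degp p k u b bx eps])
    also have "\<dots> \<le> exp (-2 * \<epsilon>\<^sup>2 * D)"
    proof -
      have Du: "D \<le> real (deg E u)" using D u by auto
      show ?thesis using mult_left_mono[OF Du, of "\<epsilon>\<^sup>2"] by simp
    qed
    finally show "measure_pmf.prob (em_step n E k p x) {y. rfrac E y u \<ge> F_pk p (2*m+1) b + \<epsilon>} \<le> exp (-2 * \<epsilon>\<^sup>2 * D)" .
  qed
  also have "\<dots> = real n * exp (-2 * \<epsilon>\<^sup>2 * D)" by simp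
  finally show ?thesis .
qed

lemma card_filter_real: "finite A \<Longrightarrow> real (card {x\<in>A. P x}) = (\<Sum>x\<in>A. if P x then 1 else 0)"
  by (simp add: sum.If_cases Int_def)

lemma vol_red:
  assumes G: "simple_graph_on n E"
  shows "vol E (red_set n y) = (\<Sum>u\<in>{1..n}. real (deg E u) * rfrac E y u)"
proof -
  let ?V = "{1..n}"
  have sym: "E u v = E v u" for u v using G unfolding simple_graph_on_def by blast
  have nb: "nbrs E u = {v\<in>?V. E u v}" for u using nbrs_sub[OF G, of u] by (auto simp: nbrs_def)
  have degs: "real (deg E v) = (\<Sum>u\<in>?V. if E u v then 1 else 0)" for v
    unfolding deg_def nb by (subst card_filter_real) (auto simp: sym)
  have "vol E (red_set n y) = (\<Sum>v\<in>?V. if \<not> y v then real (deg E v) else 0)"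
    unfolding vol_def red_set_def by (rule sum.inter_filter) simp
  also have "\<dots> = (\<Sum>v\<in>?V. \<Sum>u\<in>?V. if E u v \<and> \<not> y v then 1 else 0)"
    unfolding degs by (intro sum.cong refl) (auto simp: if_distrib)
  also have "\<dots> = (\<Sum>u\<in>?V. \<Sum>v\<in>?V. if E u v \<and> \<not> y v then 1 else 0)"
    by (rule sum.swap)
  also have "\<dots> = (\<Sum>u\<in>?V. real (card {v\<in>nbrs E u. \<not> y v}))"
  proof (intro sum.cong refl)
    fix u
    have "{v\<in>nbrs E u. \<not> y v} = {v\<in>?V. E u v \<and> \<not> y v}" unfolding nb by auto
    then show "(\<Sum>v\<in>?V. if E u v \<and> \<not> y v then 1 else 0) = real (card {v\<in>nbrs E u. \<not> y v})"
      using card_filter_real[of ?V "\<lambda>v. E u v \<and> \<not> y v"] by simp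
  qed
  also have "\<dots> = (\<Sum>u\<in>?V. real (deg E u) * rfrac E y u)"
  proof (intro sum.cong refl)
    fix u
    show "real (card {v\<in>nbrs E u. \<not> y v}) = real (deg E u) * rfrac E y u"
    proof (cases "deg E u = 0")
      case True
      have "card {v\<in>nbrs E u. \<not> y v} \<le> deg E u" unfolding deg_def
        by (rule card_mono[OF nbrs_fin[OF G]]) auto
      then show ?thesis using True by simp
    qed (simp add: rfrac_def)
  qed
  finally show ?thesis .
qed

lemma vol_V: "vol E {1..n} = (\<Sum>u\<in>{1..n}. real (deg E u))"
  by (simp add: vol_def)

lemma vol_V_pos: "n \<ge> 1 \<Longrightarrow> \<forall>v\<in>{1..n}. deg E v > 0 \<Longrightarrow> vol E {1..n} > 0"
  unfolding vol_V by (intro sum_pos) auto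

lemma ratio_lower:
  assumes G: "simple_graph_on n E" and pos: "vol E {1..n} > 0" and a: "\<forall>u\<in>{1..n}. a \<le> rfrac E y u"
  shows "a \<le> vol E (red_set n y) / vol E {1..n}"
proof -
  have "a * vol E {1..n} = (\<Sum>u\<in>{1..n}. real (deg E u) * a)" unfolding vol_V by (simp add: sum_distrib_left mult.commute)
  also have "\<dots> \<le> (\<Sum>u\<in>{1..n}. real (deg E u) * rfrac E y u)" using a by (intro sum_mono mult_left_mono) auto
  finally show ?thesis using pos unfolding vol_red[OF G] by (simp add: field_simps)
qed

lemma ratio_upper:
  assumes G: "simple_graph_on n E" and pos: "vol E {1..n} > 0" and b: "\<forall>u\<in>{1..n}. rfrac E y u \<le> b"
  shows "vol E (red_set n y) / vol E {1..n} \<le> b"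
proof -
  have "(\<Sum>u\<in>{1..n}. real (deg E u) * rfrac E y u) \<le> (\<Sum>u\<in>{1..n}. real (deg E u) * b)" using b by (intro sum_mono mult_left_mono) auto
  also have "\<dots> = b * vol E {1..n}" unfolding vol_V by (simp add: sum_distrib_left mult.commute)
  finally show ?thesis using pos unfolding vol_red[OF G] by (simp add: field_simps)
qed

lemma blue_ratio:
  assumes pos: "vol E {1..n} > 0"
  shows "vol E (blue_set n y) / vol E {1..n} = 1 - vol E (red_set n y) / vol E {1..n}"
proof -
  have "{1..n} = blue_set n y \<union> red_set n y" "blue_set n y \<inter> red_set n y = {}"
    unfolding blue_set_def red_set_def by auto
  then have "vol E {1..n} = vol E (blue_set n y) + vol E (red_set n y)"
    unfolding vol_def by (metis finite_atLeastAtMost finite_Un sum.union_disjoint)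
  then show ?thesis using pos by (simp add: field_simps)
qed

lemma rfrac_init: "deg E u > 0 \<Longrightarrow> rfrac E (\<lambda>_. False) u = 1"
  by (simp add: rfrac_def deg_def)

lemma prob_good:
  assumes "measure_pmf.prob M {xs. \<exists>t\<le>T. \<not> P t (xs ! t)} \<le> e"
  shows "measure_pmf.prob M {xs. \<forall>t\<le>T. P t (xs ! t)} \<ge> 1 - e"
proof -
  have "{xs. \<forall>t\<le>T. P t (xs ! t)} = UNIV - {xs. \<exists>t\<le>T. \<not> P t (xs ! t)}" by auto
  moreover have "measure_pmf.prob M (space (measure_pmf M) - {xs. \<exists>t\<le>T. \<not> P t (xs ! t)}) = 1 - measure_pmf.prob M {xs. \<exists>t\<le>T. \<not> P t (xs ! t)}"
    by (rule measure_pmf.prob_compl) simp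
  ultimately have "measure_pmf.prob M {xs. \<forall>t\<le>T. P t (xs ! t)} = 1 - measure_pmf.prob M {xs. \<exists>t\<le>T. \<not> P t (xs ! t)}"
    by simp
  then show ?thesis using assms by simp
qed

lemma good_lower:
  assumes G: "simple_graph_on n E" and degp: "\<forall>v\<in>{1..n}. deg E v > 0"
    and p: "0 \<le> p" "p \<le> 1" and k: "k = 2*m+1 \<or> k = 2*m+2"
    and a: "0 \<le> a" "a \<le> 1" and Fa: "F_pk p (2*m+1) a > a"
    and D: "\<forall>u\<in>{1..n}. D \<le> real (deg E u)"
  shows "measure_pmf.prob (em_traj n E k p (\<lambda>_. False) N) {xs. \<forall>t\<le>N. \<forall>u\<in>{1..n}. a \<le> rfrac E (xs ! t) u}
     \<ge> 1 - real N * (real n * exp (-2 * ((F_pk p (2*m+1) a - a) / 2)\<^sup>2 * D))"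
proof -
  define \<epsilon> where "\<epsilon> = (F_pk p (2*m+1) a - a) / 2"
  have eps: "\<epsilon> \<ge> 0" using Fa unfolding \<epsilon>_def by simp
  let ?P = "\<lambda>(t::nat) x. \<forall>u\<in>{1..n}. a \<le> rfrac E x u"
  have "measure_pmf.prob (em_traj n E k p (\<lambda>_. False) N) {xs. \<exists>t\<le>N. \<not> ?P t (xs ! t)} \<le> real N * (real n * exp (-2 * \<epsilon>\<^sup>2 * D))"
  proof (rule traj_bound)
    show "?P 0 (\<lambda>_. False)" using rfrac_init degp a by simp
    show "0 \<le> real n * exp (-2 * \<epsilon>\<^sup>2 * D)" by simp
    fix t x assume Px: "?P t x"
    have "{y. \<not> ?P (Suc t) y} \<subseteq> {y. \<exists>u\<in>{1..n}. rfrac E y u \<le> F_pk p (2*m+1) a - \<epsilon>}"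
    proof
      fix y assume "y \<in> {y. \<not> ?P (Suc t) y}"
      then obtain u where u: "u \<in> {1..n}" "rfrac E y u < a" by (auto simp: not_le)
      have h: "\<And>z::real. a < z \<Longrightarrow> a \<le> z - (z - a) / 2" by (auto simp: field_simps)
      have "a \<le> F_pk p (2*m+1) a - \<epsilon>" using h[OF Fa] unfolding \<epsilon>_def .
      then show "y \<in> {y. \<exists>u\<in>{1..n}. rfrac E y u \<le> F_pk p (2*m+1) a - \<epsilon>}" using u by force
    qed
    then have "measure_pmf.prob (em_step n E k p x) {y. \<not> ?P (Suc t) y} \<le> measure_pmf.prob (em_step n E k p x) {y. \<exists>u\<in>{1..n}. rfrac E y u \<le> F_pk p (2*m+1) a - \<epsilon>}"
      by (rule measure_pmf.finite_measure_mono) simp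
    also have "\<dots> \<le> real n * exp (-2 * \<epsilon>\<^sup>2 * D)"
      by (rule step_all_lower[OF G degp p k a _ eps D]) (use Px in simp)
    finally show "measure_pmf.prob (em_step n E k p x) {y. \<not> ?P (Suc t) y} \<le> real n * exp (-2 * \<epsilon>\<^sup>2 * D)" .
  qed
  from prob_good[OF this] show ?thesis unfolding \<epsilon>_def by simp
qed

lemma good_upper:
  assumes G: "simple_graph_on n E" and degp: "\<forall>v\<in>{1..n}. deg E v > 0"
    and p: "0 \<le> p" "p \<le> 1" and k: "k = 2*m+1 \<or> k = 2*m+2"
    and b: "\<And>t. 0 \<le> b t" "\<And>t. b t \<le> 1" "b 0 = 1"
    and bstep: "\<And>t. F_pk p (2*m+1) (b t) + \<epsilon> \<le> b (Suc t)" and eps: "\<epsilon> > 0"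
    and D: "\<forall>u\<in>{1..n}. D \<le> real (deg E u)"
  shows "measure_pmf.prob (em_traj n E k p (\<lambda>_. False) N) {xs. \<forall>t\<le>N. \<forall>u\<in>{1..n}. rfrac E (xs ! t) u \<le> b t}
     \<ge> 1 - real N * (real n * exp (-2 * \<epsilon>\<^sup>2 * D))"
proof -
  let ?P = "\<lambda>(t::nat) x. \<forall>u\<in>{1..n}. rfrac E x u \<le> b t"
  have "measure_pmf.prob (em_traj n E k p (\<lambda>_. False) N) {xs. \<exists>t\<le>N. \<not> ?P t (xs ! t)} \<le> real N * (real n * exp (-2 * \<epsilon>\<^sup>2 * D))"
  proof (rule traj_bound)
    show "?P 0 (\<lambda>_. False)" using rfrac_init degp b by simp
    show "0 \<le> real n * exp (-2 * \<epsilon>\<^sup>2 * D)" by simp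
    fix t x assume Px: "?P t x"
    have "{y. \<not> ?P (Suc t) y} \<subseteq> {y. \<exists>u\<in>{1..n}. rfrac E y u \<ge> F_pk p (2*m+1) (b t) + \<epsilon>}"
      using bstep[of t] by (force simp: not_le)
    then have "measure_pmf.prob (em_step n E k p x) {y. \<not> ?P (Suc t) y} \<le> measure_pmf.prob (em_step n E k p x) {y. \<exists>u\<in>{1..n}. rfrac E y u \<ge> F_pk p (2*m+1) (b t) + \<epsilon>}"
      by (rule measure_pmf.finite_measure_mono) simp
    also have "\<dots> \<le> real n * exp (-2 * \<epsilon>\<^sup>2 * D)"
      by (rule step_all_upper[OF G degp p k b(1) b(2) _ _ D]) (use Px eps in auto)
    finally show "measure_pmf.prob (em_step n E k p x) {y. \<not> ?P (Suc t) y} \<le> real n * exp (-2 * \<epsilon>\<^sup>2 * D)" .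
  qed
  from prob_good[OF this] show ?thesis by simp
qed

lemma lim_aux:
  fixes D :: "nat \<Rightarrow> real"
  assumes K: "K \<ge> 0" and c0: "c0 > 0" and ev: "eventually (\<lambda>n. D n \<ge> ((K+2)/c0) * ln (real n)) sequentially"
  shows "(\<lambda>n. (real n powr K) * (real n * exp (-c0 * D n))) \<longlonglongrightarrow> 0"
proof (rule tendsto_sandwich[of "\<lambda>_. 0" _ _ "\<lambda>n. inverse (real n)"])
  show "eventually (\<lambda>n. 0 \<le> (real n powr K) * (real n * exp (-c0 * D n))) sequentially" by simp
  show "(\<lambda>n. inverse (real n)) \<longlonglongrightarrow> 0" by (rule lim_inverse_n) 
  show "eventually (\<lambda>n. (real n powr K) * (real n * exp (-c0 * D n)) \<le> inverse (real n)) sequentially"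
    using ev eventually_ge_at_top[of 1]
  proof eventually_elim
    case (elim n)
    have np: "real n > 0" using elim by simp
    have "exp (-c0 * D n) \<le> exp (- ((K+2) * ln (real n)))"
    proof -
      have "c0 * (((K+2)/c0) * ln (real n)) \<le> c0 * D n" using elim c0 by (intro mult_left_mono) auto
      then have "(K+2) * ln (real n) \<le> c0 * D n" using c0 by simp
      then show ?thesis by simp
    qed
    also have "\<dots> = real n powr (- (K+2))" using np by (simp add: powr_def algebra_simps)
    finally have e: "exp (-c0 * D n) \<le> real n powr (- (K+2))" .
    have "(real n powr K) * (real n * exp (-c0 * D n)) \<le> (real n powr K) * (real n * real n powr (- (K+2)))"
      using e np by (intro mult_left_mono) auto
    also have "\<dots> = real n powr K * real n powr 1 * real n powr (- (K+2))" using np by simp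
    also have "\<dots> = real n powr (K + 1 + - (K+2))" by (simp only: powr_add)
    also have "\<dots> = real n powr (-1)" by simp
    also have "\<dots> = inverse (real n)" using np by (simp add: powr_minus)
    finally show ?case .
  qed
qed simp

lemma k_decomp:
  assumes "k \<ge> 3"
  shows "\<exists>m. m \<ge> 1 \<and> (k = 2*m+1 \<or> k = 2*m+2) \<and> p_star k = p_star_odd (2*m+1) \<and>
    (\<forall>p. phi_plus p k = Max (fixpts p (2*m+1)))"
proof (cases "odd k")
  case True
  define m where "m = (k - 1) div 2"
  have km: "k = 2*m+1" using True unfolding m_def by presburger
  show ?thesis using True assms km by (intro exI[of _ m]) (auto simp: p_star_def phi_plus_def)
next
  case False
  define m where "m = (k - 2) div 2"
  have km: "k = 2*m+2" using False assms unfolding m_def by presburger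
  have k1: "k - 1 = 2*m+1" using km by simp
  show ?thesis using False assms km k1 by (intro exI[of _ m]) (auto simp: p_star_def phi_plus_def)
qed

lemma deg_min:
  assumes "u \<in> {1..n}"
  shows "min_deg n E \<le> deg E u"
  unfolding min_deg_def using assms by (intro Min_le) auto

lemma graph_ev:
  assumes mindeg: "(\<lambda>n. real (min_deg n (E n))) \<in> \<omega>(\<lambda>n. ln (real n))"
  shows "eventually (\<lambda>n. n \<ge> 1 \<and> (\<forall>v\<in>{1..n}. deg (E n) v > 0) \<and> (\<forall>u\<in>{1..n}. c * ln (real n) \<le> real (deg (E n) u))) sequentially"
proof -
  define c' where "c' = max c 1"
  have ev: "eventually (\<lambda>n. norm (real (min_deg n (E n))) \<ge> c' * norm (ln (real n))) sequentially"
    using smallomegaD[OF mindeg] by simp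
  show ?thesis using ev eventually_ge_at_top[of "4::nat"]
  proof eventually_elim
    case (elim n)
    have ln1: "ln (real n) > 1"
    proof -
      have "exp 1 < real n" using exp_le elim by linarith
      then show ?thesis using ln_less_cancel_iff[of "exp 1" "real n"] elim by simp
    qed
    have md: "c' * ln (real n) \<le> real (min_deg n (E n))" using elim ln1 by simp
    have c'1: "c' \<ge> 1" unfolding c'_def by simp
    have "1 * 1 \<le> c' * ln (real n)" using c'1 ln1 by (intro mult_mono) auto
    then have mdp: "min_deg n (E n) > 0" using md by simp
    have cc: "c * ln (real n) \<le> c' * ln (real n)" unfolding c'_def using ln1 by (intro mult_right_mono) auto
    have A: "deg (E n) v > 0" if "v \<in> {1..n}" for v
      using deg_min[OF that, of "E n"] mdp by linarith
    have B: "c * ln (real n) \<le> real (deg (E n) u)" if "u \<in> {1..n}" for u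
    proof -
      have "real (min_deg n (E n)) \<le> real (deg (E n) u)" using deg_min[OF that, of "E n"] by simp
      then show ?thesis using cc md by linarith
    qed
    show ?case using elim A B by auto
  qed
qed

lemma to_one:
  fixes f e :: "nat \<Rightarrow> real"
  assumes "eventually (\<lambda>n. 1 - e n \<le> f n) sequentially" "\<And>n. f n \<le> 1" "e \<longlonglongrightarrow> 0"
  shows "f \<longlonglongrightarrow> 1"
proof (rule tendsto_sandwich[of "\<lambda>n. 1 - e n" f _ "\<lambda>_. 1"])
  show "(\<lambda>n. 1 - e n) \<longlonglongrightarrow> 1" using tendsto_diff[OF tendsto_const assms(3), of 1] by simp
qed (use assms in auto)

lemma mono_to_one:
  fixes f g :: "nat \<Rightarrow> real"
  assumes "g \<longlonglongrightarrow> 1" "eventually (\<lambda>n. g n \<le> f n) sequentially" "\<And>n. f n \<le> 1"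
  shows "f \<longlonglongrightarrow> 1"
  by (rule tendsto_sandwich[of g f _ "\<lambda>_. 1"]) (use assms in auto)

lemma nat_floor_le: "x \<ge> 0 \<Longrightarrow> real (nat \<lfloor>x\<rfloor>) \<le> x"
  by linarith

lemma part1_good:
  fixes E :: "nat \<Rightarrow> nat \<Rightarrow> nat \<Rightarrow> bool"
  assumes graphs: "\<And>n. simple_graph_on n (E n)"
    and mindeg: "(\<lambda>n. real (min_deg n (E n))) \<in> \<omega>(\<lambda>n. ln (real n))"
    and p: "0 \<le> p" "p \<le> 1" and k: "k = 2*m+1 \<or> k = 2*m+2"
    and a: "0 \<le> a" "a \<le> 1" and Fa: "F_pk p (2*m+1) a > a" and K: "K > 0"
  shows "(\<lambda>n. measure_pmf.prob (em_traj n (E n) k p (\<lambda>_. False) (nat \<lfloor>real n powr K\<rfloor>))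
            {xs. \<forall>t \<le> nat \<lfloor>real n powr K\<rfloor>. \<forall>u\<in>{1..n}. a \<le> rfrac (E n) (xs ! t) u}) \<longlonglongrightarrow> 1"
proof -
  define \<epsilon> where "\<epsilon> = (F_pk p (2*m+1) a - a) / 2"
  have epos: "\<epsilon> > 0" using Fa unfolding \<epsilon>_def by simp
  define c0 where "c0 = 2 * \<epsilon>\<^sup>2"
  have c0: "c0 > 0" using epos unfolding c0_def by simp
  define c where "c = (K + 2) / c0"
  define e where "e = (\<lambda>n::nat. real (nat \<lfloor>real n powr K\<rfloor>) * (real n * exp (-2 * \<epsilon>\<^sup>2 * (c * ln (real n)))))"
  show ?thesis
  proof (rule to_one[where e = e])
    show "eventually (\<lambda>n. 1 - e n \<le> measure_pmf.prob (em_traj n (E n) k p (\<lambda>_. False) (nat \<lfloor>real n powr K\<rfloor>))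
            {xs. \<forall>t \<le> nat \<lfloor>real n powr K\<rfloor>. \<forall>u\<in>{1..n}. a \<le> rfrac (E n) (xs ! t) u}) sequentially"
      using graph_ev[OF mindeg, of c]
    proof eventually_elim
      case (elim n)
      show ?case unfolding e_def \<epsilon>_def
        by (rule good_lower[OF graphs _ p k a Fa]) (use elim in auto)
    qed
    show "\<And>n. measure_pmf.prob (em_traj n (E n) k p (\<lambda>_. False) (nat \<lfloor>real n powr K\<rfloor>))
            {xs. \<forall>t \<le> nat \<lfloor>real n powr K\<rfloor>. \<forall>u\<in>{1..n}. a \<le> rfrac (E n) (xs ! t) u} \<le> 1"
      by simp
    show "e \<longlonglongrightarrow> 0"
    proof (rule tendsto_sandwich[of "\<lambda>_. 0" _ _ "\<lambda>n. (real n powr K) * (real n * exp (-c0 * (c * ln (real n))))"])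
      show "eventually (\<lambda>n. 0 \<le> e n) sequentially" unfolding e_def by simp
      show "eventually (\<lambda>n. e n \<le> (real n powr K) * (real n * exp (-c0 * (c * ln (real n))))) sequentially"
      proof (rule always_eventually, rule allI)
        fix n :: nat
        have q: "-2 * \<epsilon>\<^sup>2 * (c * ln (real n)) = -c0 * (c * ln (real n))" unfolding c0_def by simp
        have "real (nat \<lfloor>real n powr K\<rfloor>) \<le> real n powr K" by (rule nat_floor_le) simp
        then show "e n \<le> (real n powr K) * (real n * exp (-c0 * (c * ln (real n))))"
          unfolding e_def q by (rule mult_right_mono) simp
      qed
      show "(\<lambda>n. (real n powr K) * (real n * exp (-c0 * (c * ln (real n))))) \<longlonglongrightarrow> 0"
        by (rule lim_aux[OF _ c0]) (use K in \<open>auto simp: c_def\<close>)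
    qed simp
  qed
qed

lemma part2:
  fixes E :: "nat \<Rightarrow> nat \<Rightarrow> nat \<Rightarrow> bool"
  assumes graphs: "\<And>n. simple_graph_on n (E n)"
    and mindeg: "(\<lambda>n. real (min_deg n (E n))) \<in> \<omega>(\<lambda>n. ln (real n))"
    and p: "0 \<le> p" "p \<le> 1" and k: "k = 2*m+1 \<or> k = 2*m+2"
    and below: "\<And>x. 0 < x \<Longrightarrow> x \<le> 1 \<Longrightarrow> F_pk p (2*m+1) x < x"
  shows "\<exists>T::nat. (\<lambda>n. measure_pmf.prob (em_traj n (E n) k p (\<lambda>_. False) T)
            {xs. \<exists>t < T. vol (E n) (blue_set n (xs ! t)) / vol (E n) {1..n} > 1/2}) \<longlonglongrightarrow> 1"
proof -
  let ?F = "F_pk p (2*m+1)"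
  have cont: "continuous_on {1/2..1} (\<lambda>x. x - ?F x)"
    by (intro continuous_intros continuous_on_subset[OF F_cont[OF p]]) auto
  obtain x0 where x0: "x0 \<in> {1/2..1}" "\<And>y. y \<in> {1/2..1} \<Longrightarrow> x0 - ?F x0 \<le> y - ?F y"
    using continuous_attains_inf[OF compact_Icc _ cont] by auto
  define \<mu> where "\<mu> = x0 - ?F x0"
  have mupos: "\<mu> > 0" unfolding \<mu>_def using below[of x0] x0 by auto
  have mule: "\<mu> \<le> 1/2"
  proof -
    have "\<mu> \<le> 1/2 - ?F (1/2)" unfolding \<mu>_def using x0(2)[of "1/2"] by auto
    moreover have "0 \<le> ?F (1/2)" using F_range[OF p, of "1/2"] by auto
    ultimately show ?thesis by linarith
  qed
  have Fle: "?F x \<le> x - \<mu>" if "x \<in> {1/2..1}" for x using x0(2)[OF that] unfolding \<mu>_def by linarith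
  define b where "b = (\<lambda>t::nat. max (1 - real t * \<mu> / 2) (1/2 - \<mu>/2))"
  have b0: "\<And>t. 0 \<le> b t" unfolding b_def using mule by (auto simp: max_def)
  have b1: "\<And>t. b t \<le> 1" unfolding b_def using mupos by (auto simp: max_def)
  have bz: "b 0 = 1" unfolding b_def using mupos by (auto simp: max_def)
  have bstep: "?F (b t) + \<mu>/2 \<le> b (Suc t)" for t
  proof (cases "b t \<ge> 1/2")
    case True
    have "?F (b t) \<le> b t - \<mu>" using Fle[of "b t"] True b1 by auto
    moreover have "b t - \<mu>/2 \<le> b (Suc t)"
    proof -
      have e: "1 - real (Suc t) * \<mu> / 2 = (1 - real t * \<mu> / 2) - \<mu>/2" by (simp add: algebra_simps)
      have gen: "\<And>A B::real. max A B - \<mu>/2 \<le> max (A - \<mu>/2) B" using mupos by (auto simp: max_def)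
      show ?thesis unfolding b_def e by (rule gen)
    qed
    ultimately show ?thesis by linarith
  next
    case False
    have "?F (b t) \<le> ?F (1/2)" using False b0 by (intro F_mono[OF p]) auto
    also have "\<dots> \<le> 1/2 - \<mu>" using Fle[of "1/2"] by auto
    finally have "?F (b t) + \<mu>/2 \<le> 1/2 - \<mu>/2" by linarith
    also have "\<dots> \<le> b (Suc t)" unfolding b_def by simp
    finally show ?thesis .
  qed
  define T where "T = nat \<lceil>1 / \<mu>\<rceil> + 1"
  have bT: "b T < 1/2"
  proof -
    have "real T \<ge> 1 / \<mu> + 1" unfolding T_def by linarith
    then have "real T * \<mu> \<ge> (1 / \<mu> + 1) * \<mu>" using mupos by (intro mult_right_mono) auto
    moreover have "(1 / \<mu> + 1) * \<mu> = 1 + \<mu>" using mupos by (simp add: field_simps)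
    ultimately have "real T * \<mu> \<ge> 1 + \<mu>" by linarith
    then show ?thesis unfolding b_def using mupos by (auto simp: max_def)
  qed
  define c0 where "c0 = 2 * (\<mu>/2)\<^sup>2"
  have c0: "c0 > 0" using mupos unfolding c0_def by simp
  define c where "c = (0 + 2) / c0"
  define e where "e = (\<lambda>n::nat. real (Suc T) * (real n * exp (-2 * (\<mu>/2)\<^sup>2 * (c * ln (real n)))))"
  define g where "g = (\<lambda>n. measure_pmf.prob (em_traj n (E n) k p (\<lambda>_. False) (Suc T))
            {xs. \<forall>t \<le> Suc T. \<forall>u\<in>{1..n}. rfrac (E n) (xs ! t) u \<le> b t})"
  have g1: "g \<longlonglongrightarrow> 1"
  proof (rule to_one[where e = e])
    show "eventually (\<lambda>n. 1 - e n \<le> g n) sequentially"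
      using graph_ev[OF mindeg, of c]
    proof eventually_elim
      case (elim n)
      show ?case unfolding e_def g_def
        by (rule good_upper[OF graphs _ p k b0 b1 bz bstep]) (use elim mupos in auto)
    qed
    show "\<And>n. g n \<le> 1" unfolding g_def by simp
    show "e \<longlonglongrightarrow> 0"
    proof (rule tendsto_sandwich[of "\<lambda>_. 0" _ _ "\<lambda>n. real (Suc T) * ((real n powr 0) * (real n * exp (-c0 * (c * ln (real n)))))"])
      show "eventually (\<lambda>n. 0 \<le> e n) sequentially" unfolding e_def by simp
      show "eventually (\<lambda>n. e n \<le> real (Suc T) * ((real n powr 0) * (real n * exp (-c0 * (c * ln (real n)))))) sequentially"
        using eventually_ge_at_top[of "1::nat"]
      proof eventually_elim
        case (elim n)
        have q: "-2 * (\<mu>/2)\<^sup>2 * (c * ln (real n)) = -c0 * (c * ln (real n))" unfolding c0_def by simp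
        show ?case unfolding e_def q using elim by simp
      qed
      have "(\<lambda>n. (real n powr 0) * (real n * exp (-c0 * (c * ln (real n))))) \<longlonglongrightarrow> 0"
        by (rule lim_aux[OF _ c0]) (auto simp: c_def)
      then show "(\<lambda>n. real (Suc T) * ((real n powr 0) * (real n * exp (-c0 * (c * ln (real n)))))) \<longlonglongrightarrow> 0"
        by (rule tendsto_mult_right_zero)
    qed simp
  qed
  have "(\<lambda>n. measure_pmf.prob (em_traj n (E n) k p (\<lambda>_. False) (Suc T))
            {xs. \<exists>t < Suc T. vol (E n) (blue_set n (xs ! t)) / vol (E n) {1..n} > 1/2}) \<longlonglongrightarrow> 1"
  proof (rule mono_to_one[OF g1])
    show "eventually (\<lambda>n. g n \<le> measure_pmf.prob (em_traj n (E n) k p (\<lambda>_. False) (Suc T))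
            {xs. \<exists>t < Suc T. vol (E n) (blue_set n (xs ! t)) / vol (E n) {1..n} > 1/2}) sequentially"
      using graph_ev[OF mindeg, of 0]
    proof eventually_elim
      case (elim n)
      have pos: "vol (E n) {1..n} > 0" using vol_V_pos elim by blast
      show ?case unfolding g_def
      proof (rule measure_pmf.finite_measure_mono)
        show "{xs. \<forall>t \<le> Suc T. \<forall>u\<in>{1..n}. rfrac (E n) (xs ! t) u \<le> b t} \<subseteq>
            {xs. \<exists>t < Suc T. vol (E n) (blue_set n (xs ! t)) / vol (E n) {1..n} > 1/2}"
        proof
          fix xs assume "xs \<in> {xs. \<forall>t \<le> Suc T. \<forall>u\<in>{1..n}. rfrac (E n) (xs ! t) u \<le> b t}"
          then have h: "\<forall>u\<in>{1..n}. rfrac (E n) (xs ! T) u \<le> b T" by auto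
          have "vol (E n) (red_set n (xs ! T)) / vol (E n) {1..n} \<le> b T"
            by (rule ratio_upper[OF graphs pos h])
          then have "vol (E n) (blue_set n (xs ! T)) / vol (E n) {1..n} > 1/2"
            unfolding blue_ratio[OF pos] using bT by linarith
          then show "xs \<in> {xs. \<exists>t < Suc T. vol (E n) (blue_set n (xs ! t)) / vol (E n) {1..n} > 1/2}"
            by auto
        qed
      qed simp
    qed
  qed simp
  then show ?thesis by blast
qed

theorem theorem5p2:
  fixes E :: "nat \<Rightarrow> nat \<Rightarrow> nat \<Rightarrow> bool" and p :: real and k :: nat
  assumes graphs: "\<And>n. simple_graph_on n (E n)"
    and mindeg: "(\<lambda>n. real (min_deg n (E n))) \<in> \<omega>(\<lambda>n. ln (real n))"
    and p: "0 \<le> p" "p \<le> 1"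
    and k: "k \<ge> 3"
  shows
   "(p < p_star k \<longrightarrow>
      (\<forall>\<gamma>::real. \<forall>K::real. \<gamma> > 0 \<and> K > 0 \<longrightarrow>
         (\<lambda>n. measure_pmf.prob (em_traj n (E n) k p (\<lambda>_. False) (nat \<lfloor>real n powr K\<rfloor>))
            {xs. \<forall>t \<le> nat \<lfloor>real n powr K\<rfloor>.
                 vol (E n) (red_set n (xs ! t)) / vol (E n) {1..n} \<ge> phi_plus p k - \<gamma>})
         \<longlonglongrightarrow> 1) \<and>
      (\<forall>K::real. K > 0 \<longrightarrow>
         (\<lambda>n. measure_pmf.prob (em_traj n (E n) k p (\<lambda>_. False) (nat \<lfloor>real n powr K\<rfloor>))
            {xs. \<forall>t \<le> nat \<lfloor>real n powr K\<rfloor>.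
                 \<not> (vol (E n) (blue_set n (xs ! t)) / vol (E n) {1..n} > 1/2)})
         \<longlonglongrightarrow> 1)) \<and>
    (p > p_star k \<longrightarrow>
      (\<exists>T::nat.
         (\<lambda>n. measure_pmf.prob (em_traj n (E n) k p (\<lambda>_. False) T)
            {xs. \<exists>t < T. vol (E n) (blue_set n (xs ! t)) / vol (E n) {1..n} > 1/2})
         \<longlonglongrightarrow> 1))"
proof -
  obtain m where m: "m \<ge> 1" "k = 2*m+1 \<or> k = 2*m+2" "p_star k = p_star_odd (2*m+1)"
      "\<forall>p. phi_plus p k = Max (fixpts p (2*m+1))"
    using k_decomp[OF k] by blast
  obtain q0 where hs: "hstruct m q0" using hstruct_ex[OF m(1)] by blast
  have P1a: "(\<lambda>n. measure_pmf.prob (em_traj n (E n) k p (\<lambda>_. False) (nat \<lfloor>real n powr K\<rfloor>))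
            {xs. \<forall>t \<le> nat \<lfloor>real n powr K\<rfloor>.
                 vol (E n) (red_set n (xs ! t)) / vol (E n) {1..n} \<ge> phi_plus p k - \<gamma>})
         \<longlonglongrightarrow> 1" if pp: "p < p_star k" and g: "\<gamma> > 0" and K: "K > 0" for \<gamma> K
  proof -
    have pp': "p < p_star_odd (2*m+1)" using pp m by simp
    obtain a where a: "1/2 < a" "a \<le> 1" "Max (fixpts p (2*m+1)) - \<gamma> \<le> a" "F_pk p (2*m+1) a > a"
      using hstruct.above_props(3)[OF hs p(1) pp' g] by blast
    have a0: "0 \<le> a" using a by simp
    have good: "(\<lambda>n. measure_pmf.prob (em_traj n (E n) k p (\<lambda>_. False) (nat \<lfloor>real n powr K\<rfloor>))
            {xs. \<forall>t \<le> nat \<lfloor>real n powr K\<rfloor>. \<forall>u\<in>{1..n}. a \<le> rfrac (E n) (xs ! t) u}) \<longlonglongrightarrow> 1"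
      by (rule part1_good[OF graphs mindeg p m(2) a0 a(2) a(4) K])
    show ?thesis
    proof (rule mono_to_one[OF good])
      show "eventually (\<lambda>n. measure_pmf.prob (em_traj n (E n) k p (\<lambda>_. False) (nat \<lfloor>real n powr K\<rfloor>))
            {xs. \<forall>t \<le> nat \<lfloor>real n powr K\<rfloor>. \<forall>u\<in>{1..n}. a \<le> rfrac (E n) (xs ! t) u}
          \<le> measure_pmf.prob (em_traj n (E n) k p (\<lambda>_. False) (nat \<lfloor>real n powr K\<rfloor>))
            {xs. \<forall>t \<le> nat \<lfloor>real n powr K\<rfloor>.
                 vol (E n) (red_set n (xs ! t)) / vol (E n) {1..n} \<ge> phi_plus p k - \<gamma>}) sequentially"
        using graph_ev[OF mindeg, of 0]
      proof eventually_elim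
        case (elim n)
        have pos: "vol (E n) {1..n} > 0" using vol_V_pos elim by blast
        show ?case
        proof (rule measure_pmf.finite_measure_mono)
          show "{xs. \<forall>t \<le> nat \<lfloor>real n powr K\<rfloor>. \<forall>u\<in>{1..n}. a \<le> rfrac (E n) (xs ! t) u} \<subseteq>
              {xs. \<forall>t \<le> nat \<lfloor>real n powr K\<rfloor>.
                 vol (E n) (red_set n (xs ! t)) / vol (E n) {1..n} \<ge> phi_plus p k - \<gamma>}"
          proof (intro subsetI CollectI allI impI)
            fix xs t assume xs: "xs \<in> {xs. \<forall>t \<le> nat \<lfloor>real n powr K\<rfloor>. \<forall>u\<in>{1..n}. a \<le> rfrac (E n) (xs ! t) u}"
              and t: "t \<le> nat \<lfloor>real n powr K\<rfloor>"
            have "\<forall>u\<in>{1..n}. a \<le> rfrac (E n) (xs ! t) u" using xs t by auto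
            then have "a \<le> vol (E n) (red_set n (xs ! t)) / vol (E n) {1..n}"
              by (rule ratio_lower[OF graphs pos])
            then show "vol (E n) (red_set n (xs ! t)) / vol (E n) {1..n} \<ge> phi_plus p k - \<gamma>"
              using a(3) m(4) by simp
          qed
        qed simp
      qed
    qed simp
  qed
  have P1b: "(\<lambda>n. measure_pmf.prob (em_traj n (E n) k p (\<lambda>_. False) (nat \<lfloor>real n powr K\<rfloor>))
            {xs. \<forall>t \<le> nat \<lfloor>real n powr K\<rfloor>.
                 \<not> (vol (E n) (blue_set n (xs ! t)) / vol (E n) {1..n} > 1/2)})
         \<longlonglongrightarrow> 1" if pp: "p < p_star k" and K: "K > 0" for K
  proof -
    have pp': "p < p_star_odd (2*m+1)" using pp m by simp
    have phi: "phi_plus p k > 1/2" using hstruct.above_props(1)[OF hs p(1) pp'] m(4) by simp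
    define \<gamma> where "\<gamma> = (phi_plus p k - 1/2) / 2"
    have g: "\<gamma> > 0" using phi unfolding \<gamma>_def by simp
    show ?thesis
    proof (rule mono_to_one[OF P1a[OF pp g K]])
      show "eventually (\<lambda>n. measure_pmf.prob (em_traj n (E n) k p (\<lambda>_. False) (nat \<lfloor>real n powr K\<rfloor>))
            {xs. \<forall>t \<le> nat \<lfloor>real n powr K\<rfloor>.
                 vol (E n) (red_set n (xs ! t)) / vol (E n) {1..n} \<ge> phi_plus p k - \<gamma>}
          \<le> measure_pmf.prob (em_traj n (E n) k p (\<lambda>_. False) (nat \<lfloor>real n powr K\<rfloor>))
            {xs. \<forall>t \<le> nat \<lfloor>real n powr K\<rfloor>.
                 \<not> (vol (E n) (blue_set n (xs ! t)) / vol (E n) {1..n} > 1/2)}) sequentially"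
        using graph_ev[OF mindeg, of 0]
      proof eventually_elim
        case (elim n)
        have pos: "vol (E n) {1..n} > 0" using vol_V_pos elim by blast
        show ?case
        proof (rule measure_pmf.finite_measure_mono)
          show "{xs. \<forall>t \<le> nat \<lfloor>real n powr K\<rfloor>.
                 vol (E n) (red_set n (xs ! t)) / vol (E n) {1..n} \<ge> phi_plus p k - \<gamma>} \<subseteq>
              {xs. \<forall>t \<le> nat \<lfloor>real n powr K\<rfloor>.
                 \<not> (vol (E n) (blue_set n (xs ! t)) / vol (E n) {1..n} > 1/2)}"
          proof (intro subsetI CollectI allI impI)
            fix xs t assume xs: "xs \<in> {xs. \<forall>t \<le> nat \<lfloor>real n powr K\<rfloor>.
                 vol (E n) (red_set n (xs ! t)) / vol (E n) {1..n} \<ge> phi_plus p k - \<gamma>}"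
              and t: "t \<le> nat \<lfloor>real n powr K\<rfloor>"
            have "vol (E n) (red_set n (xs ! t)) / vol (E n) {1..n} \<ge> phi_plus p k - \<gamma>" using xs t by auto
            moreover have "phi_plus p k - \<gamma> > 1/2"
            proof -
              have h: "\<And>z::real. z > 1/2 \<Longrightarrow> z - (z - 1/2) / 2 > 1/2" by (auto simp: field_simps)
              show ?thesis using h[OF phi] unfolding \<gamma>_def .
            qed
            ultimately show "\<not> (vol (E n) (blue_set n (xs ! t)) / vol (E n) {1..n} > 1/2)"
              unfolding blue_ratio[OF pos] by linarith
          qed
        qed simp
      qed
    qed simp
  qed
  have P2: "\<exists>T::nat.
         (\<lambda>n. measure_pmf.prob (em_traj n (E n) k p (\<lambda>_. False) T)
            {xs. \<exists>t < T. vol (E n) (blue_set n (xs ! t)) / vol (E n) {1..n} > 1/2})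
         \<longlonglongrightarrow> 1" if pp: "p > p_star k"
  proof (rule part2[OF graphs mindeg p m(2)])
    fix x :: real assume "0 < x" "x \<le> 1"
    moreover have "p_star_odd (2*m+1) < p" using pp m by simp
    ultimately show "F_pk p (2*m+1) x < x" using hstruct.below_props[OF hs _ p(2)] by blast
  qed
  show ?thesis using P1a P1b P2 by blast
qed

end
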